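(* There is a universal numerical constant $c<\infty$ such that the following holds. Suppose the chain is $\varrho$-metastable w.r.t. $\mathcal M=\{M_1,\dots,M_K\}$, $K\ge2$, let $(\mathcal S_i)$ be a metastable partition, assume $C_{\mathrm{PI},j}<\infty$ for all $j$ and $C_{\mathrm{mass}}<\infty$. Then for every $f\in\ell^2(\mu)$ and every $i$, $$\mathrm{Ent}_{\mu_i}\bigl[\mathbb E_\mu[f^2\mid\mathcal F]\bigr]\le c\,\frac{C_{\mathrm{mass}}\,C_{\mathrm{PI},\mathcal M}\,\varrho}{\mu[\mathcal S_i]\,p_{\mathrm{esc}}}\,\mathcal E(f).$$
   Context: Setting: $\mathcal S$ countable; $(X(t))_{t\in\mathbb N_0}$ irreducible positive recurrent discrete-time Markov chain with transition probabilities $p(x,y)$, reversible w.r.t. its invariant probability measure $\mu$; $\mathbb P_\nu$ law started from $\nu$; $\tau_A=\inf\{t>0:X(t)\in A\}$; $\mu_A=\mu[\cdot\mid A]$; $\mathcal E(f)=\frac12\sum_{x,y}\mu(x)p(x,y)(f(x)-f(y))^2$; $\mathrm{Ent}_\nu[g]=\mathbb E_\nu[g\ln g]-\mathbb E_\nu[g]\ln\mathbb E_\nu[g]$. Metastability: $\mathcal M=\{M_1,\dots,M_K\}$ nonempty pairwise disjoint, $\mathbf M=\bigcup_jM_j$; $p_{\mathrm{esc}}:=\max_{M\in\mathcal M}\mathbb P_{\mu_M}[\tau_{\mathbf M\setminus M}<\tau_M]$; $\varrho$-metastable means $|\mathcal M|\,p_{\mathrm{esc}}\le\varrho\min_{\emptyset\ne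 A\subset\mathcal S\setminus\mathbf M}\mathbb P_{\mu_A}[\tau_{\mathbf M}<\tau_A]$. Local valley $\mathcal V_i=\{x:\mathbb P_x[\tau_{M_i}<\tau_{\mathbf M\setminus M_i}]\ge\max_{j\ne i}\mathbb P_x[\tau_{M_j}<\tau_{\mathbf M\setminus M_j}]\}$; metastable partition: $\mathcal S=\biguplus_i\mathcal S_i$, $\mathcal S_i\subset\mathcal V_i$, $M_i\subset\mathcal S_i$; $\mu_i=\mu[\cdot\mid\mathcal S_i]$. $\mathcal F$ is the $\sigma$-algebra generated by the partition of $\mathcal S$ into $M_1,\dots,M_K$ and the singletons $\{x\}$, $x\notin\mathbf M$. $C_{\mathrm{PI},j}=\sup\{\mathrm{Var}_{\mu_{M_j}}[f]:f\in\ell^2(\mu),\mathcal E(f)=1\}$, $C_{\mathrm{PI},\mathcal M}=\max\{1,\sum_j\mu[M_j]C_{\mathrm{PI},j}\}$, $C_{\mathrm{mass}}=\max_j\max_{x\in\mathcal S_j}\ln(1+e^2/\mu_j(x))$. *)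

theory Defs
  imports "HOL-Probability.Probability"
begin

text \<open>State space: a subset S of nat (any countable set up to relabelling).
  Transition kernel P :: nat => nat pmf, p(x,y) = pmf (P x) y.
  mu :: nat => real is the invariant probability measure.\<close>

definition trans_p :: "(nat \<Rightarrow> nat pmf) \<Rightarrow> nat \<Rightarrow> nat \<Rightarrow> real" where
  "trans_p P x y = pmf (P x) y"

text \<open>Law of the path (X(1),...,X(n)) under P_x.\<close>
fun path_pmf :: "(nat \<Rightarrow> nat pmf) \<Rightarrow> nat \<Rightarrow> nat \<Rightarrow> nat list pmf" where
  "path_pmf P 0 x = return_pmf []"
| "path_pmf P (Suc n) x = bind_pmf (P x) (\<lambda>y. map_pmf (Cons y) (path_pmf P n y))"

text \<open>P_x[tau_A < tau_B], tau_A = inf{t>0 : X(t) in A}, inf {} = infinity: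
  the first time t>0 at which the chain is in A or B, exists and the chain is then in A but not B.\<close>
definition hit_before :: "(nat \<Rightarrow> nat pmf) \<Rightarrow> nat set \<Rightarrow> nat set \<Rightarrow> nat \<Rightarrow> real" where
  "hit_before P A B x = (SUP n. measure_pmf.prob (path_pmf P n x)
      {xs. \<exists>k<length xs. xs!k \<in> A \<and> xs!k \<notin> B \<and> (\<forall>j<k. xs!j \<notin> A \<and> xs!j \<notin> B)})"

definition mass :: "(nat \<Rightarrow> real) \<Rightarrow> nat set \<Rightarrow> real" where
  "mass \<mu> A = (\<Sum>\<^sub>\<infinity>x\<in>A. \<mu> x)"

definition prob_from :: "(nat \<Rightarrow> real) \<Rightarrow> nat set \<Rightarrow> (nat \<Rightarrow> real) \<Rightarrow> real" where
  "prob_from \<mu> A h = (\<Sum>\<^sub>\<infinity>x\<in>A. \<mu> x * h x) / mass \<mu> A"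

definition irreducible :: "nat set \<Rightarrow> (nat \<Rightarrow> nat pmf) \<Rightarrow> bool" where
  "irreducible S P \<longleftrightarrow> (\<forall>x\<in>S. \<forall>y\<in>S. x \<noteq> y \<longrightarrow>
      (\<exists>n. measure_pmf.prob (path_pmf P n x) {xs. y \<in> set xs} > 0))"

text \<open>Positive recurrence: E_x[tau_x] = sum_{n>=0} P_x[tau_x > n] < infinity for all x.\<close>
definition positive_recurrent :: "nat set \<Rightarrow> (nat \<Rightarrow> nat pmf) \<Rightarrow> bool" where
  "positive_recurrent S P \<longleftrightarrow> (\<forall>x\<in>S.
      summable (\<lambda>n. measure_pmf.prob (path_pmf P n x) {xs. x \<notin> set xs}))"

definition markov_setting :: "nat set \<Rightarrow> (nat \<Rightarrow> nat pmf) \<Rightarrow> (nat \<Rightarrow> real) \<Rightarrow> bool" where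
  "markov_setting S P \<mu> \<longleftrightarrow>
     (\<forall>x\<in>S. set_pmf (P x) \<subseteq> S) \<and>
     irreducible S P \<and> positive_recurrent S P \<and>
     (\<forall>x\<in>S. 0 \<le> \<mu> x) \<and> (\<mu> has_sum 1) S \<and>
     (\<forall>y\<in>S. ((\<lambda>x. \<mu> x * trans_p P x y) has_sum \<mu> y) S) \<and>
     (\<forall>x\<in>S. \<forall>y\<in>S. \<mu> x * trans_p P x y = \<mu> y * trans_p P y x)"

definition l2 :: "nat set \<Rightarrow> (nat \<Rightarrow> real) \<Rightarrow> (nat \<Rightarrow> real) \<Rightarrow> bool" where
  "l2 S \<mu> f \<longleftrightarrow> (\<lambda>x. \<mu> x * (f x)\<^sup>2) summable_on S"

definition dirichlet :: "nat set \<Rightarrow> (nat \<Rightarrow> nat pmf) \<Rightarrow> (nat \<Rightarrow> real) \<Rightarrow> (nat \<Rightarrow> real) \<Rightarrow> real" where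
  "dirichlet S P \<mu> f = (1/2) * (\<Sum>\<^sub>\<infinity>(x,y)\<in>S \<times> S. \<mu> x * trans_p P x y * (f x - f y)\<^sup>2)"

definition expect :: "(nat \<Rightarrow> real) \<Rightarrow> nat set \<Rightarrow> (nat \<Rightarrow> real) \<Rightarrow> real" where
  "expect \<mu> A g = (\<Sum>\<^sub>\<infinity>x\<in>A. (\<mu> x / mass \<mu> A) * g x)"

definition variance_on :: "(nat \<Rightarrow> real) \<Rightarrow> nat set \<Rightarrow> (nat \<Rightarrow> real) \<Rightarrow> real" where
  "variance_on \<mu> A f = expect \<mu> A (\<lambda>x. (f x)\<^sup>2) - (expect \<mu> A f)\<^sup>2"

text \<open>Ent_{mu_A}[g]; +infinity if g ln g is not mu_A-summable (its negative part is always summable).\<close>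
definition ent :: "(nat \<Rightarrow> real) \<Rightarrow> nat set \<Rightarrow> (nat \<Rightarrow> real) \<Rightarrow> ereal" where
  "ent \<mu> A g = (if (\<lambda>x. \<mu> x * (g x * ln (g x))) summable_on A
      then ereal (expect \<mu> A (\<lambda>x. g x * ln (g x)) - expect \<mu> A g * ln (expect \<mu> A g))
      else \<infinity>)"

definition C_PI :: "nat set \<Rightarrow> (nat \<Rightarrow> nat pmf) \<Rightarrow> (nat \<Rightarrow> real) \<Rightarrow> nat set \<Rightarrow> ereal" where
  "C_PI S P \<mu> Mj = Sup {ereal (variance_on \<mu> Mj f) | f. l2 S \<mu> f \<and> dirichlet S P \<mu> f = 1}"

definition C_PI_M :: "nat set \<Rightarrow> (nat \<Rightarrow> nat pmf) \<Rightarrow> (nat \<Rightarrow> real) \<Rightarrow> nat \<Rightarrow> (nat \<Rightarrow> nat set) \<Rightarrow> ereal" where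
  "C_PI_M S P \<mu> K M = max 1 (\<Sum>j<K. ereal (mass \<mu> (M j)) * C_PI S P \<mu> (M j))"

definition C_mass :: "(nat \<Rightarrow> real) \<Rightarrow> nat \<Rightarrow> (nat \<Rightarrow> nat set) \<Rightarrow> ereal" where
  "C_mass \<mu> K Sp = (SUP j\<in>{..<K}. SUP x\<in>Sp j.
      ereal (ln (1 + exp 2 / (\<mu> x / mass \<mu> (Sp j)))))"

definition Mall :: "nat \<Rightarrow> (nat \<Rightarrow> nat set) \<Rightarrow> nat set" where
  "Mall K M = (\<Union>j<K. M j)"

definition metastable_sets :: "nat set \<Rightarrow> nat \<Rightarrow> (nat \<Rightarrow> nat set) \<Rightarrow> bool" where
  "metastable_sets S K M \<longleftrightarrow> (\<forall>j<K. M j \<noteq> {} \<and> M j \<subseteq> S) \<and>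
     (\<forall>i<K. \<forall>j<K. i \<noteq> j \<longrightarrow> M i \<inter> M j = {})"

definition p_esc :: "(nat \<Rightarrow> nat pmf) \<Rightarrow> (nat \<Rightarrow> real) \<Rightarrow> nat \<Rightarrow> (nat \<Rightarrow> nat set) \<Rightarrow> real" where
  "p_esc P \<mu> K M = Max ((\<lambda>j. prob_from \<mu> (M j) (hit_before P (Mall K M - M j) (M j))) ` {..<K})"

definition rho_metastable :: "nat set \<Rightarrow> (nat \<Rightarrow> nat pmf) \<Rightarrow> (nat \<Rightarrow> real) \<Rightarrow> nat \<Rightarrow> (nat \<Rightarrow> nat set) \<Rightarrow> real \<Rightarrow> bool" where
  "rho_metastable S P \<mu> K M \<rho> \<longleftrightarrow> (\<forall>A. A \<noteq> {} \<and> A \<subseteq> S - Mall K M \<longrightarrow>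
      real K * p_esc P \<mu> K M \<le> \<rho> * prob_from \<mu> A (hit_before P (Mall K M) A))"

definition valley :: "nat set \<Rightarrow> (nat \<Rightarrow> nat pmf) \<Rightarrow> nat \<Rightarrow> (nat \<Rightarrow> nat set) \<Rightarrow> nat \<Rightarrow> nat set" where
  "valley S P K M i = {x\<in>S. hit_before P (M i) (Mall K M - M i) x \<ge>
      Max ((\<lambda>j. hit_before P (M j) (Mall K M - M j) x) ` ({..<K} - {i}))}"

definition metastable_partition :: "nat set \<Rightarrow> (nat \<Rightarrow> nat pmf) \<Rightarrow> nat \<Rightarrow> (nat \<Rightarrow> nat set) \<Rightarrow> (nat \<Rightarrow> nat set) \<Rightarrow> bool" where
  "metastable_partition S P K M Sp \<longleftrightarrow>
     (\<Union>i<K. Sp i) = S \<and> (\<forall>i<K. \<forall>j<K. i \<noteq> j \<longrightarrow> Sp i \<inter> Sp j = {}) \<and>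
     (\<forall>i<K. Sp i \<subseteq> valley S P K M i \<and> M i \<subseteq> Sp i)"

text \<open>E_mu[f^2 | F]: average of f^2 over M_j w.r.t. mu on M_j, and f^2 itself off M.\<close>
definition cond_sq :: "(nat \<Rightarrow> real) \<Rightarrow> nat \<Rightarrow> (nat \<Rightarrow> nat set) \<Rightarrow> (nat \<Rightarrow> real) \<Rightarrow> nat \<Rightarrow> real" where
  "cond_sq \<mu> K M f x = (if \<exists>j<K. x \<in> M j
      then expect \<mu> (M (THE j. j < K \<and> x \<in> M j)) (\<lambda>y. (f y)\<^sup>2)
      else (f x)\<^sup>2)"

end

theory Submission
  imports Defs
begin



lemma prob_bind_finite:
  assumes "finite A" "set_pmf M \<subseteq> A"
  shows "measure_pmf.prob (bind_pmf M N) X = (\<Sum>a\<in>A. pmf M a * measure_pmf.prob (N a) X)"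
proof -
  have "emeasure (measure_pmf (bind_pmf M N)) X = (\<integral>\<^sup>+x. emeasure (measure_pmf (N x)) X \<partial>measure_pmf M)"
    by simp
  also have "\<dots> = (\<Sum>x\<in>A. emeasure (measure_pmf (N x)) X * pmf M x)"
    using assms by (intro nn_integral_measure_pmf_support) auto
  also have "\<dots> = ennreal (\<Sum>x\<in>A. pmf M x * measure_pmf.prob (N x) X)"
    by (simp add: measure_pmf.emeasure_eq_measure ennreal_mult'' sum_ennreal[symmetric] mult.commute ennreal_mult)
  finally show ?thesis
    by (simp add: measure_pmf.emeasure_eq_measure sum_nonneg)
qed

definition Ev :: "nat set \<Rightarrow> nat set \<Rightarrow> nat list set" where
  "Ev A B = {xs. \<exists>k<length xs. xs!k \<in> A \<and> xs!k \<notin> B \<and> (\<forall>j<k. xs!j \<notin> A \<and> xs!j \<notin> B)}"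

lemma Ev_Nil[simp]: "[] \<notin> Ev A B" by (simp add: Ev_def)

lemma Ev_Cons: "(y # ys \<in> Ev A B) = (y\<in>A \<and> y\<notin>B \<or> (y\<notin>A \<and> y\<notin>B \<and> ys \<in> Ev A B))"
proof
  assume "y # ys \<in> Ev A B"
  then obtain k where k: "k < length (y#ys)" "(y#ys)!k \<in> A" "(y#ys)!k \<notin> B"
    "\<forall>j<k. (y#ys)!j \<notin> A \<and> (y#ys)!j \<notin> B" by (auto simp: Ev_def)
  show "y\<in>A \<and> y\<notin>B \<or> (y\<notin>A \<and> y\<notin>B \<and> ys \<in> Ev A B)"
  proof (cases k)
    case 0 then show ?thesis using k by simp
  next
    case (Suc k')
    have "y \<notin> A \<and> y \<notin> B" using k(4)[rule_format, of 0] Suc by simp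
    moreover have "ys \<in> Ev A B" unfolding Ev_def
    proof (intro CollectI exI[of _ k'] conjI allI impI)
      show "k' < length ys" using k(1) Suc by simp
      show "ys!k' \<in> A" "ys!k' \<notin> B" using k(2,3) Suc by auto
      fix j assume "j < k'" then show "ys!j \<notin> A" "ys!j \<notin> B" using k(4)[rule_format, of "Suc j"] Suc
        by simp_all
    qed
    ultimately show ?thesis by simp
  qed
next
  assume H: "y\<in>A \<and> y\<notin>B \<or> (y\<notin>A \<and> y\<notin>B \<and> ys \<in> Ev A B)"
  show "y # ys \<in> Ev A B"
  proof (cases "y\<in>A \<and> y\<notin>B")
    case True then show ?thesis unfolding Ev_def by (intro CollectI exI[of _ 0]) auto
  next
    case False
    then have y: "y\<notin>A" "y\<notin>B" and "ys \<in> Ev A B" using H by auto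
    then obtain k where k: "k < length ys" "ys!k \<in> A" "ys!k \<notin> B"
      "\<forall>j<k. ys!j \<notin> A \<and> ys!j \<notin> B" by (auto simp: Ev_def)
    show ?thesis unfolding Ev_def
    proof (intro CollectI exI[of _ "Suc k"] conjI allI impI)
      show "Suc k < length (y#ys)" using k by simp
      show "(y#ys)!Suc k \<in> A" "(y#ys)!Suc k \<notin> B" using k by auto
      fix j assume "j < Suc k" then show "(y#ys)!j \<notin> A" "(y#ys)!j \<notin> B"
        using k(4) y by (cases j; auto)+
    qed
  qed
qed

lemma hit_before_Ev: "hit_before P A B x = (SUP n. measure_pmf.prob (path_pmf P n x) (Ev A B))"
  unfolding hit_before_def Ev_def by simp

definition Av :: "nat set \<Rightarrow> nat list set" where "Av U = {xs. set xs \<inter> U = {}}"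

locale pchain =
  fixes S :: "nat set" and P :: "nat \<Rightarrow> nat pmf"
  assumes closedS: "\<And>x. x\<in>S \<Longrightarrow> set_pmf (P x) \<subseteq> S"
    and irr: "irreducible S P"
begin

lemma path_closed:
  assumes W: "\<And>x. x\<in>W \<Longrightarrow> set_pmf (P x) \<subseteq> W" and x: "x \<in> W"
    and xs: "xs \<in> set_pmf (path_pmf P n x)"
  shows "set xs \<subseteq> W"
  using x xs
proof (induction n arbitrary: x xs)
  case 0 then show ?case by simp
next
  case (Suc n)
  from Suc.prems(2) obtain y ys where "y \<in> set_pmf (P x)" "ys \<in> set_pmf (path_pmf P n y)" "xs = y # ys"
    by auto
  then show ?case using Suc.IH[of y ys] W Suc.prems(1) by auto
qed

lemma closed_contra:
  assumes W: "\<And>x. x\<in>W \<Longrightarrow> set_pmf (P x) \<subseteq> W" and WS: "W \<subseteq> S"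
    and x: "x \<in> W" and u: "u \<in> S" "u \<notin> W"
  shows False
proof -
  have "x \<in> S" "x \<noteq> u" using x u WS by auto
  then obtain n where n: "measure_pmf.prob (path_pmf P n x) {xs. u \<in> set xs} > 0"
    using irr u unfolding irreducible_def by blast
  have "set_pmf (path_pmf P n x) \<inter> {xs. u \<in> set xs} = {}"
    using path_closed[OF W x] u by blast
  then have "measure_pmf.prob (path_pmf P n x) {xs. u \<in> set xs} = 0"
    using measure_pmf_zero_iff by blast
  with n show False by simp
qed

end




locale fpath = pchain +
  assumes finS: "finite S"
begin

abbreviation p where "p \<equiv> trans_p P"

lemma p_nonneg: "0 \<le> p x y" by (simp add: trans_p_def)

lemma sum_p: "x \<in> S \<Longrightarrow> (\<Sum>y\<in>S. p x y) = 1"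
  unfolding trans_p_def using sum_pmf_eq_1[OF finS closedS] by simp

lemma p_zero: "x \<in> S \<Longrightarrow> y \<notin> S \<Longrightarrow> p x y = 0"
  unfolding trans_p_def using closedS by (meson pmf_eq_0_set_pmf subsetD)

lemma p_pos_in: "x \<in> S \<Longrightarrow> p x y > 0 \<Longrightarrow> y \<in> set_pmf (P x)"
  unfolding trans_p_def by (simp add: set_pmf_iff)

definition hn where "hn A B n x = measure_pmf.prob (path_pmf P n x) (Ev A B)"

definition Hh :: "nat set \<Rightarrow> nat set \<Rightarrow> (nat \<Rightarrow> real) \<Rightarrow> nat \<Rightarrow> real" where
  "Hh A B f y = (if y\<in>A \<and> y\<notin>B then 1 else if y\<in>A \<or> y\<in>B then 0 else f y)"

lemma hn_0[simp]: "hn A B 0 x = 0"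
  by (simp add: hn_def)

lemma prob_path_Suc:
  assumes "x \<in> S"
  shows "measure_pmf.prob (path_pmf P (Suc n) x) X
     = (\<Sum>y\<in>S. p x y * measure_pmf.prob (path_pmf P n y) {ys. y # ys \<in> X})"
proof -
  have "measure_pmf.prob (path_pmf P (Suc n) x) X
     = (\<Sum>y\<in>S. pmf (P x) y * measure_pmf.prob (map_pmf (Cons y) (path_pmf P n y)) X)"
    by (simp only: path_pmf.simps) (rule prob_bind_finite[OF finS closedS[OF assms]])
  also have "\<dots> = (\<Sum>y\<in>S. p x y * measure_pmf.prob (path_pmf P n y) {ys. y # ys \<in> X})"
    by (simp add: trans_p_def vimage_def)
  finally show ?thesis .
qed

lemma hn_Suc:
  assumes "x \<in> S"
  shows "hn A B (Suc n) x = (\<Sum>y\<in>S. p x y * Hh A B (hn A B n) y)"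
  unfolding hn_def prob_path_Suc[OF assms]
proof (rule sum.cong[OF refl])
  fix y
  have "{ys. y # ys \<in> Ev A B} = (if y\<in>A \<and> y\<notin>B then UNIV else if y\<in>A \<or> y\<in>B then {} else Ev A B)"
    by (auto simp: Ev_Cons)
  then show "p x y * measure_pmf.prob (path_pmf P n y) {ys. y # ys \<in> Ev A B} =
         p x y * Hh A B (\<lambda>x. measure_pmf.prob (path_pmf P n x) (Ev A B)) y"
    by (simp add: Hh_def)
qed

lemma hn_nonneg: "0 \<le> hn A B n x" by (simp add: hn_def)
lemma hn_le1: "hn A B n x \<le> 1" by (simp add: hn_def)

lemma Hh_mono: "(\<And>y. y \<in> S \<Longrightarrow> f y \<le> g y) \<Longrightarrow> y \<in> S \<Longrightarrow> Hh A B f y \<le> Hh A B g y"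
  by (simp add: Hh_def)

lemma hn_mono_Suc: "x \<in> S \<Longrightarrow> hn A B n x \<le> hn A B (Suc n) x"
proof (induction n arbitrary: x)
  case 0 then show ?case by (simp add: hn_nonneg)
next
  case (Suc n)
  show ?case unfolding hn_Suc[OF Suc.prems] hn_Suc[OF Suc.prems, of A B "Suc n"]
    by (intro sum_mono mult_left_mono Hh_mono Suc.IH) (auto simp: p_nonneg)
qed

lemma hn_incseq: "x \<in> S \<Longrightarrow> incseq (\<lambda>n. hn A B n x)"
  by (rule incseq_SucI) (rule hn_mono_Suc)

lemma hit_hn: "hit_before P A B x = (SUP n. hn A B n x)"
  by (simp add: hit_before_Ev hn_def)

lemma bdd_hn: "bdd_above (range (\<lambda>n. hn A B n x))"
  by (rule bdd_aboveI[of _ 1]) (auto simp: hn_le1)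

lemma hn_lim: "x \<in> S \<Longrightarrow> (\<lambda>n. hn A B n x) \<longlonglongrightarrow> hit_before P A B x"
  unfolding hit_hn by (rule LIMSEQ_incseq_SUP[OF bdd_hn hn_incseq])

lemma hit_nonneg: "0 \<le> hit_before P A B x"
  unfolding hit_hn using cSUP_upper[OF _ bdd_hn, of 0 A B x] hn_nonneg[of A B 0 x] by simp

lemma hit_le1: "hit_before P A B x \<le> 1"
  unfolding hit_hn by (rule cSUP_least) (auto simp: hn_le1)

lemma hn_le_hit: "hn A B n x \<le> hit_before P A B x"
  unfolding hit_hn by (rule cSUP_upper[OF _ bdd_hn]) simp

lemma Hh_lim: "y \<in> S \<Longrightarrow> (\<lambda>n. Hh A B (hn A B n) y) \<longlonglongrightarrow> Hh A B (hit_before P A B) y"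
  unfolding Hh_def using hn_lim[of y A B] by auto

lemma hit_OS:
  assumes "x \<in> S"
  shows "hit_before P A B x = (\<Sum>y\<in>S. p x y * Hh A B (hit_before P A B) y)"
proof -
  have "(\<lambda>n. hn A B (Suc n) x) \<longlonglongrightarrow> hit_before P A B x"
    using hn_lim[OF assms] by (rule LIMSEQ_Suc)
  moreover have "(\<lambda>n. hn A B (Suc n) x) \<longlonglongrightarrow> (\<Sum>y\<in>S. p x y * Hh A B (hit_before P A B) y)"
    unfolding hn_Suc[OF assms] by (intro tendsto_sum tendsto_mult tendsto_const Hh_lim)
  ultimately show ?thesis by (rule LIMSEQ_unique)
qed

lemma hn_mono_B:
  assumes "A \<inter> B = {}" "B' \<subseteq> B" "x \<in> S"
  shows "hn A B n x \<le> hn A B' n x"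
  using assms(3)
proof (induction n arbitrary: x)
  case 0 then show ?case by simp
next
  case (Suc n)
  show ?case unfolding hn_Suc[OF Suc.prems]
  proof (intro sum_mono mult_left_mono)
    fix y assume y: "y \<in> S"
    show "Hh A B (hn A B n) y \<le> Hh A B' (hn A B' n) y"
      using assms(1,2) Suc.IH[OF y] hn_nonneg[of A B' n y] unfolding Hh_def by auto
  qed (simp add: p_nonneg)
qed

lemma hit_mono_B:
  assumes "A \<inter> B = {}" "B' \<subseteq> B" "x \<in> S"
  shows "hit_before P A B x \<le> hit_before P A B' x"
  using hn_lim[OF assms(3)] hn_lim[OF assms(3)] hn_mono_B[OF assms]
  by (intro LIMSEQ_le[OF hn_lim[OF assms(3)] hn_lim[OF assms(3)]]) auto

end



context fpath begin

definition av where "av U n x = measure_pmf.prob (path_pmf P n x) (Av U)"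

lemma av_0[simp]: "av U 0 x = 1"
  by (simp add: av_def Av_def)

lemma av_Suc: "x \<in> S \<Longrightarrow> av U (Suc n) x = (\<Sum>y\<in>S. p x y * (if y \<in> U then 0 else av U n y))"
  unfolding av_def prob_path_Suc
  by (rule sum.cong[OF refl]) (auto simp: Av_def)

lemma av_nonneg: "0 \<le> av U n x" by (simp add: av_def)

lemma av_mono_Suc: "x \<in> S \<Longrightarrow> av U (Suc n) x \<le> av U n x"
proof (induction n arbitrary: x)
  case 0
  have "av U (Suc 0) x \<le> (\<Sum>y\<in>S. p x y * 1)"
    unfolding av_Suc[OF 0] by (intro sum_mono mult_left_mono) (auto simp: p_nonneg)
  then show ?case using sum_p[OF 0] by simp
next
  case (Suc n)
  show ?case unfolding av_Suc[OF Suc.prems] av_Suc[OF Suc.prems, of U "Suc n"]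
    by (intro sum_mono mult_left_mono) (auto simp: p_nonneg Suc.IH)
qed

definition rr where "rr U x = (INF n. av U n x)"

lemma bdd_av: "bdd_below (range (\<lambda>n. av U n x))"
  by (rule bdd_belowI[of _ 0]) (auto simp: av_nonneg)

lemma av_lim: "x \<in> S \<Longrightarrow> (\<lambda>n. av U n x) \<longlonglongrightarrow> rr U x"
  unfolding rr_def by (rule LIMSEQ_decseq_INF[OF bdd_av]) (rule decseq_SucI, rule av_mono_Suc)

lemma rr_nonneg: "x \<in> S \<Longrightarrow> 0 \<le> rr U x"
  using av_lim by (intro LIMSEQ_le_const[OF av_lim]) (auto simp: av_nonneg)

lemma rr_OS: "x \<in> S \<Longrightarrow> rr U x = (\<Sum>y\<in>S. p x y * (if y \<in> U then 0 else rr U y))"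
proof -
  assume x: "x \<in> S"
  have "(\<lambda>n. av U (Suc n) x) \<longlonglongrightarrow> rr U x" using av_lim[OF x] by (rule LIMSEQ_Suc)
  moreover have "(\<lambda>n. av U (Suc n) x) \<longlonglongrightarrow> (\<Sum>y\<in>S. p x y * (if y \<in> U then 0 else rr U y))"
    unfolding av_Suc[OF x]
    by (intro tendsto_sum tendsto_mult tendsto_const) (auto intro: av_lim)
  ultimately show ?thesis by (rule LIMSEQ_unique)
qed

lemma rr_zero:
  assumes U: "U \<inter> S \<noteq> {}" and x: "x \<in> S"
  shows "rr U x = 0"
proof (rule ccontr)
  assume "rr U x \<noteq> 0"
  with rr_nonneg[OF x, of U] have rx: "rr U x > 0" by simp
  define R where "R = Max (rr U ` S)"
  have SR: "y \<in> S \<Longrightarrow> rr U y \<le> R" for y unfolding R_def using finS by simp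
  have Rpos: "R > 0" using SR[OF x] rx by simp
  have "R \<in> rr U ` S" unfolding R_def using finS x by (intro Max_in) auto
  then obtain x0 where x0: "x0 \<in> S" "rr U x0 = R" by auto
  have succ: "y \<notin> U \<and> rr U y = R" if xS: "x' \<in> S" and xR: "rr U x' = R" and y: "y \<in> set_pmf (P x')" for x' y
  proof -
    define g where "g y = (if y \<in> U then 0 else rr U y)" for y
    have gR: "y \<in> S \<Longrightarrow> g y \<le> R" for y using SR Rpos by (simp add: g_def)
    have "(\<Sum>y\<in>S. p x' y * (R - g y)) = R * (\<Sum>y\<in>S. p x' y) - (\<Sum>y\<in>S. p x' y * g y)"
      by (simp add: algebra_simps sum_subtractf sum_distrib_left)
    also have "\<dots> = 0" using sum_p[OF xS] rr_OS[OF xS] xR by (simp add: g_def)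
    finally have s0: "(\<Sum>y\<in>S. p x' y * (R - g y)) = 0" .
    have "\<forall>y\<in>S. p x' y * (R - g y) = 0"
      using s0 sum_nonneg_eq_0_iff[OF finS, of "\<lambda>y. p x' y * (R - g y)"] gR p_nonneg
      by (simp add: mult_nonneg_nonneg)
    moreover have "y \<in> S" using closedS[OF xS] y by auto
    moreover have "p x' y > 0" using y by (simp add: trans_p_def pmf_positive)
    ultimately have "g y = R" by force
    then show ?thesis using Rpos by (auto simp: g_def split: if_splits)
  qed
  define W where "W = {y\<in>S. y \<notin> U \<and> rr U y = R}"
  have Wc: "set_pmf (P y) \<subseteq> W" if "y \<in> W" for y
    using succ that closedS unfolding W_def by blast
  obtain y1 where y1: "y1 \<in> set_pmf (P x0)" using set_pmf_not_empty by fastforce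
  have y1W: "y1 \<in> W" using succ[OF x0 y1] closedS[OF x0(1)] y1 unfolding W_def by auto
  obtain u where u: "u \<in> U" "u \<in> S" using U by auto
  show False using closed_contra[OF Wc _ y1W u(2)] u(1) unfolding W_def by auto
qed

lemma av_lim0: "U \<inter> S \<noteq> {} \<Longrightarrow> x \<in> S \<Longrightarrow> (\<lambda>n. av U n x) \<longlonglongrightarrow> 0"
  using av_lim rr_zero by metis

lemma recur:
  fixes K :: nat and C :: "nat \<Rightarrow> nat set"
  assumes disj: "\<And>i j. i<K \<Longrightarrow> j<K \<Longrightarrow> i\<noteq>j \<Longrightarrow> C i \<inter> C j = {}"
    and U: "U = (\<Union>j<K. C j)" and US: "U \<inter> S \<noteq> {}" and x: "x \<in> S"
  shows "(\<Sum>j<K. hit_before P (C j) (U - C j) x) = 1"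
proof -
  have ind: "(\<Sum>j<K. hn (C j) (U - C j) n x) + av U n x = 1" if "x \<in> S" for n x
    using that
  proof (induction n arbitrary: x)
    case 0 then show ?case by simp
  next
    case (Suc n)
    have pt: "(\<Sum>j<K. Hh (C j) (U - C j) (hn (C j) (U - C j) n) y) + (if y \<in> U then 0 else av U n y) = 1"
      if y: "y \<in> S" for y
    proof (cases "y \<in> U")
      case True
      then obtain j0 where j0: "j0 < K" "y \<in> C j0" using U by auto
      have "(\<Sum>j<K. Hh (C j) (U - C j) (hn (C j) (U - C j) n) y) = (\<Sum>j<K. if j = j0 then 1 else 0)"
      proof (rule sum.cong[OF refl])
        fix j assume "j \<in> {..<K}"
        then have "j < K" by simp
        then show "Hh (C j) (U - C j) (hn (C j) (U - C j) n) y = (if j = j0 then 1 else 0)"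
          using disj[of j j0] j0 True unfolding Hh_def by auto
      qed
      also have "\<dots> = 1" using j0(1) by simp
      finally show ?thesis using True by simp
    next
      case False
      then have "Hh (C j) (U - C j) (hn (C j) (U - C j) n) y = hn (C j) (U - C j) n y" if "j < K" for j
        unfolding Hh_def using U that by auto
      then show ?thesis using Suc.IH[OF y] False by simp
    qed
    have "(\<Sum>j<K. hn (C j) (U - C j) (Suc n) x) + av U (Suc n) x
      = (\<Sum>j<K. \<Sum>y\<in>S. p x y * Hh (C j) (U - C j) (hn (C j) (U - C j) n) y)
        + (\<Sum>y\<in>S. p x y * (if y \<in> U then 0 else av U n y))"
      by (simp add: hn_Suc[OF Suc.prems] av_Suc[OF Suc.prems])
    also have "\<dots> = (\<Sum>y\<in>S. p x y * ((\<Sum>j<K. Hh (C j) (U - C j) (hn (C j) (U - C j) n) y)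
        + (if y \<in> U then 0 else av U n y)))"
      by (subst sum.swap) (simp add: sum_distrib_left distrib_left sum.distrib)
    also have "\<dots> = (\<Sum>y\<in>S. p x y)" using pt by simp
    also have "\<dots> = 1" using sum_p[OF Suc.prems] .
    finally show ?case .
  qed
  have "(\<lambda>n. (\<Sum>j<K. hn (C j) (U - C j) n x) + av U n x) \<longlonglongrightarrow> (\<Sum>j<K. hit_before P (C j) (U - C j) x) + 0"
    by (intro tendsto_add tendsto_sum hn_lim av_lim0 x US)
  moreover have "(\<lambda>n. (\<Sum>j<K. hn (C j) (U - C j) n x) + av U n x) \<longlonglongrightarrow> 1"
    using ind[OF x] by simp
  ultimately show ?thesis using LIMSEQ_unique by fastforce
qed

lemma recur2:
  assumes AB: "A \<inter> B = {}" and ABS: "(A \<union> B) \<inter> S \<noteq> {}" and x: "x \<in> S"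
  shows "hit_before P A B x + hit_before P B A x = 1"
proof -
  define C where "C j = (if j = 0 then A else B)" for j :: nat
  have CU: "(\<Union>j<2. C j) = A \<union> B"
  proof
    show "(\<Union>j<2. C j) \<subseteq> A \<union> B" by (auto simp: C_def)
    show "A \<union> B \<subseteq> (\<Union>j<2. C j)"
    proof
      fix z assume "z \<in> A \<union> B"
      then have "z \<in> C 0 \<or> z \<in> C 1" by (auto simp: C_def)
      then show "z \<in> (\<Union>j<2. C j)" by (metis UN_iff lessThan_iff one_less_numeral_iff pos2 semiring_norm(76))
    qed
  qed
  have "(\<Sum>j<2. hit_before P (C j) ((\<Union>j<2. C j) - C j) x) = 1"
  proof (rule recur[OF _ refl])
    show "(\<Union>j<2. C j) \<inter> S \<noteq> {}" using CU ABS by simp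
    show "x \<in> S" by fact
    fix i j :: nat assume "i < 2" "j < 2" "i \<noteq> j"
    then have "(i = 0 \<and> j = 1) \<or> (i = 1 \<and> j = 0)" by linarith
    then show "C i \<inter> C j = {}" using AB by (auto simp: C_def)
  qed
  then have "hit_before P (C 0) (A \<union> B - C 0) x + hit_before P (C 1) (A \<union> B - C 1) x = 1"
    unfolding CU by (simp add: numeral_2_eq_2)
  moreover have "A \<union> B - A = B" "A \<union> B - B = A" using AB by auto
  ultimately show ?thesis by (simp add: C_def)
qed

end



lemma sum_if_sub: "finite S \<Longrightarrow> A \<subseteq> S \<Longrightarrow> (\<Sum>x\<in>S. if x \<in> A then f x else 0) = sum f A"
  by (simp add: sum.If_cases Int_absorb1)

locale fchain = fpath +
  fixes \<mu> :: "nat \<Rightarrow> real"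
  assumes mupos: "\<And>x. x\<in>S \<Longrightarrow> 0 < \<mu> x"
    and stat: "\<And>y. y\<in>S \<Longrightarrow> (\<Sum>x\<in>S. \<mu> x * p x y) = \<mu> y"
    and rev: "\<And>x y. x\<in>S \<Longrightarrow> y\<in>S \<Longrightarrow> \<mu> x * p x y = \<mu> y * p y x"
begin

definition E where "E u = (1/2) * (\<Sum>x\<in>S. \<Sum>y\<in>S. \<mu> x * p x y * (u x - u y)\<^sup>2)"
definition EE where "EE u v = (1/2) * (\<Sum>x\<in>S. \<Sum>y\<in>S. \<mu> x * p x y * ((u x - u y) * (v x - v y)))"
definition Lop where "Lop v x = (\<Sum>y\<in>S. p x y * v y) - v x"

lemma E_EE: "E u = EE u u" by (simp add: E_def EE_def power2_eq_square)

lemma E_nonneg: "0 \<le> E u"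
  unfolding E_def using mupos p_nonneg
  by (intro mult_nonneg_nonneg sum_nonneg) (auto intro: mult_nonneg_nonneg less_imp_le)

lemma EE_sym: "EE u v = EE v u" by (simp add: EE_def mult.commute)

lemma E_add: "E (\<lambda>x. g x + w x) = E g + 2 * EE g w + E w"
proof -
  have pt: "\<mu> x * p x y * ((g x + w x) - (g y + w y))\<^sup>2 = \<mu> x * p x y * (g x - g y)\<^sup>2
     + 2 * (\<mu> x * p x y * ((g x - g y) * (w x - w y))) + \<mu> x * p x y * (w x - w y)\<^sup>2" for x y
    by (simp add: power2_eq_square algebra_simps)
  have "(\<Sum>x\<in>S. \<Sum>y\<in>S. \<mu> x * p x y * ((g x + w x) - (g y + w y))\<^sup>2)
    = (\<Sum>x\<in>S. \<Sum>y\<in>S. \<mu> x * p x y * (g x - g y)\<^sup>2)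
      + 2 * (\<Sum>x\<in>S. \<Sum>y\<in>S. \<mu> x * p x y * ((g x - g y) * (w x - w y)))
      + (\<Sum>x\<in>S. \<Sum>y\<in>S. \<mu> x * p x y * (w x - w y)\<^sup>2)"
    by (simp only: pt sum.distrib sum_distrib_left)
  then show ?thesis unfolding E_def EE_def by (simp add: algebra_simps)
qed

lemma E_scale: "E (\<lambda>x. c * u x) = c\<^sup>2 * E u"
  unfolding E_def
  by (simp add: power2_eq_square algebra_simps sum_distrib_left)

lemma sum_mu_Lop: "(\<Sum>x\<in>S. \<mu> x * Lop v x) = 0"
proof -
  have "(\<Sum>x\<in>S. \<mu> x * Lop v x) = (\<Sum>x\<in>S. \<Sum>y\<in>S. \<mu> x * p x y * v y) - (\<Sum>x\<in>S. \<mu> x * v x)"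
    by (simp add: Lop_def algebra_simps sum_subtractf sum_distrib_left)
  also have "(\<Sum>x\<in>S. \<Sum>y\<in>S. \<mu> x * p x y * v y) = (\<Sum>y\<in>S. (\<Sum>x\<in>S. \<mu> x * p x y) * v y)"
    by (subst sum.swap) (simp add: sum_distrib_right)
  also have "\<dots> = (\<Sum>y\<in>S. \<mu> y * v y)" by (simp add: stat)
  finally show ?thesis by simp
qed

lemma green: "EE u v = - (\<Sum>x\<in>S. \<mu> x * u x * Lop v x)"
proof -
  have s2: "(\<Sum>x\<in>S. \<Sum>y\<in>S. \<mu> x * p x y * (u y * (v x - v y)))
        = (\<Sum>x\<in>S. \<Sum>y\<in>S. \<mu> x * p x y * (u x * (v y - v x)))"
  proof -
    have "(\<Sum>x\<in>S. \<Sum>y\<in>S. \<mu> x * p x y * (u y * (v x - v y)))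
        = (\<Sum>x\<in>S. \<Sum>y\<in>S. \<mu> y * p y x * (u y * (v x - v y)))"
      by (intro sum.cong refl) (simp add: rev)
    also have "\<dots> = (\<Sum>x\<in>S. \<Sum>y\<in>S. \<mu> x * p x y * (u x * (v y - v x)))"
      by (rule sum.swap)
    finally show ?thesis .
  qed
  have pt1: "\<mu> x * p x y * ((u x - u y) * (v x - v y)) = \<mu> x * p x y * (u x * (v x - v y)) - \<mu> x * p x y * (u y * (v x - v y))" for x y
    by (simp add: algebra_simps)
  have pt2: "\<mu> x * p x y * (u x * (v y - v x)) = - (\<mu> x * p x y * (u x * (v x - v y)))" for x y
    by (simp add: algebra_simps)
  have "(\<Sum>x\<in>S. \<Sum>y\<in>S. \<mu> x * p x y * ((u x - u y) * (v x - v y)))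
      = (\<Sum>x\<in>S. \<Sum>y\<in>S. \<mu> x * p x y * (u x * (v x - v y)))
        - (\<Sum>x\<in>S. \<Sum>y\<in>S. \<mu> x * p x y * (u y * (v x - v y)))"
    by (simp only: pt1 sum_subtractf)
  also have "\<dots> = 2 * (\<Sum>x\<in>S. \<Sum>y\<in>S. \<mu> x * p x y * (u x * (v x - v y)))"
    unfolding s2 by (simp only: pt2 sum_negf)
  also have "(\<Sum>x\<in>S. \<Sum>y\<in>S. \<mu> x * p x y * (u x * (v x - v y))) = (\<Sum>x\<in>S. - (\<mu> x * u x * Lop v x))"
  proof (rule sum.cong[OF refl])
    fix x assume x: "x \<in> S"
    have "(\<Sum>y\<in>S. \<mu> x * p x y * (u x * (v x - v y)))
        = \<mu> x * u x * (v x * (\<Sum>y\<in>S. p x y) - (\<Sum>y\<in>S. p x y * v y))"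
      by (simp add: algebra_simps sum_subtractf sum_distrib_left sum_distrib_right)
    then show "(\<Sum>y\<in>S. \<mu> x * p x y * (u x * (v x - v y))) = - (\<mu> x * u x * Lop v x)"
      by (simp add: sum_p[OF x] Lop_def algebra_simps)
  qed
  finally show ?thesis by (simp add: EE_def sum_negf)
qed

lemma Lop_hit:
  assumes "x \<in> S"
  shows "Lop (Hh A B (hit_before P A B)) x = hit_before P A B x - Hh A B (hit_before P A B) x"
  unfolding Lop_def using hit_OS[OF assms, of A B] by simp

lemma cap_le:
  assumes AB: "A \<inter> B = {}" and AS: "A \<subseteq> S" and BS: "B \<subseteq> S"
    and v1: "\<And>x. x \<in> A \<Longrightarrow> v x = 1" and v0: "\<And>x. x \<in> B \<Longrightarrow> v x = 0"
  shows "(\<Sum>y\<in>B. \<mu> y * hit_before P A B y) \<le> E v"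
proof -
  define g where "g = Hh A B (hit_before P A B)"
  have L: "x \<in> S \<Longrightarrow> Lop g x = hit_before P A B x - g x" for x unfolding g_def by (rule Lop_hit)
  have pt: "\<mu> x * g x * Lop g x = \<mu> x * Lop g x - (if x \<in> B then \<mu> x * hit_before P A B x else 0)"
    if x: "x \<in> S" for x
    using AB L[OF x] unfolding g_def Hh_def by (auto simp: algebra_simps)
  have "E g = - (\<Sum>x\<in>S. \<mu> x * g x * Lop g x)" by (simp add: E_EE green)
  also have "\<dots> = (\<Sum>x\<in>S. if x \<in> B then \<mu> x * hit_before P A B x else 0) - (\<Sum>x\<in>S. \<mu> x * Lop g x)"
    by (simp add: pt sum_subtractf)
  also have "\<dots> = (\<Sum>y\<in>B. \<mu> y * hit_before P A B y)"
    by (simp add: sum_mu_Lop sum_if_sub[OF finS BS])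
  finally have Eg: "E g = (\<Sum>y\<in>B. \<mu> y * hit_before P A B y)" .
  define w where "w x = v x - g x" for x
  have w0: "x \<in> S \<Longrightarrow> w x * Lop g x = 0" for x
    using v1 v0 AB L unfolding w_def g_def Hh_def by auto
  have "EE g w = EE w g" by (rule EE_sym)
  also have "\<dots> = - (\<Sum>x\<in>S. \<mu> x * w x * Lop g x)" by (rule green)
  also have "\<dots> = 0" using w0 by (simp add: mult.assoc sum.neutral)
  finally have "EE g w = 0" .
  have "E v = E (\<lambda>x. g x + w x)" by (simp add: w_def)
  also have "\<dots> = E g + 2 * EE g w + E w" by (rule E_add)
  finally have "E v = E g + E w" using \<open>EE g w = 0\<close> by simp
  then show ?thesis using Eg E_nonneg[of w] by simp
qed

end



context fchain begin

lemma esc_identity: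
  assumes QS: "Q \<subseteq> S" and MiQ: "Mi \<subseteq> Q" and AS: "A \<subseteq> S" and AQ: "A \<inter> Q = {}"
  shows "(\<Sum>x\<in>A. \<mu> x * hit_before P Q A x * hit_before P Mi (Q - Mi) x)
       = (\<Sum>y\<in>Mi. \<mu> y * (1 - hit_before P Q A y))"
proof -
  define e where "e = Hh Q A (hit_before P Q A)"
  define h where "h = Hh Mi (Q - Mi) (hit_before P Mi (Q - Mi))"
  have Le: "x \<in> S \<Longrightarrow> Lop e x = hit_before P Q A x - e x" for x unfolding e_def by (rule Lop_hit)
  have Lh: "x \<in> S \<Longrightarrow> Lop h x = hit_before P Mi (Q - Mi) x - h x" for x unfolding h_def by (rule Lop_hit)
  have pt1: "\<mu> x * e x * Lop h x = \<mu> x * Lop h x" if x: "x \<in> S" for x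
  proof (cases "x \<in> Q")
    case True then show ?thesis using AQ by (auto simp: e_def Hh_def)
  next
    case False then have "Lop h x = 0" using Lh[OF x] MiQ by (auto simp: h_def Hh_def)
    then show ?thesis by simp
  qed
  have "EE e h = - (\<Sum>x\<in>S. \<mu> x * e x * Lop h x)" by (rule green)
  also have "\<dots> = 0" by (simp add: pt1 sum_mu_Lop)
  finally have "EE h e = 0" by (simp add: EE_sym)
  then have z: "(\<Sum>x\<in>S. \<mu> x * h x * Lop e x) = 0" by (simp add: green)
  have pt2: "\<mu> x * h x * Lop e x = (if x \<in> A then \<mu> x * hit_before P Q A x * hit_before P Mi (Q - Mi) x else 0)
      + (if x \<in> Mi then \<mu> x * (hit_before P Q A x - 1) else 0)" if x: "x \<in> S" for x
  proof -
    consider "x \<in> A" | "x \<in> Mi" | "x \<in> Q - Mi" | "x \<notin> A \<and> x \<notin> Q" by blast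
    then show ?thesis
    proof cases
      case 1
      then have "x \<notin> Q" "x \<notin> Mi" using AQ MiQ by auto
      then show ?thesis using 1 Le[OF x] by (simp add: e_def h_def Hh_def)
    next
      case 2
      then have "x \<in> Q" "x \<notin> A" using AQ MiQ by auto
      then show ?thesis using 2 Le[OF x] by (simp add: e_def h_def Hh_def)
    next
      case 3
      then have "x \<notin> A" using AQ by auto
      then show ?thesis using 3 by (simp add: h_def Hh_def)
    next
      case 4
      then have "x \<notin> Mi" using MiQ by auto
      moreover have "Lop e x = 0" using Le[OF x] 4 by (simp add: e_def Hh_def)
      ultimately show ?thesis using 4 by simp
    qed
  qed
  have "0 = (\<Sum>x\<in>S. (if x \<in> A then \<mu> x * hit_before P Q A x * hit_before P Mi (Q - Mi) x else 0)
      + (if x \<in> Mi then \<mu> x * (hit_before P Q A x - 1) else 0))"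
    using z pt2 by simp
  also have "\<dots> = (\<Sum>x\<in>A. \<mu> x * hit_before P Q A x * hit_before P Mi (Q - Mi) x)
      + (\<Sum>x\<in>Mi. \<mu> x * (hit_before P Q A x - 1))"
    using MiQ QS AS by (simp add: sum.distrib sum_if_sub[OF finS])
  finally show ?thesis by (simp add: algebra_simps sum_subtractf sum_negf)
qed

end



lemma dyadic:
  fixes a s :: real
  assumes "0 < a" "a \<le> s" "s < a * 2 ^ Suc N"
  shows "\<exists>k\<le>N. a * 2 ^ k \<le> s \<and> s < a * 2 ^ Suc k"
  using assms(3)
proof (induction N)
  case 0 then show ?case using assms(2) by auto
next
  case (Suc N)
  show ?case
  proof (cases "s < a * 2 ^ Suc N")
    case True then show ?thesis using Suc.IH le_SucI by blast
  next
    case False then show ?thesis using Suc.prems by (intro exI[of _ "Suc N"]) auto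
  qed
qed

definition cl :: "real \<Rightarrow> real \<Rightarrow> real" where "cl t s = min (t/2) (max 0 (s - t/2))"

lemma cl_mono: "u \<le> v \<Longrightarrow> cl t u \<le> cl t v"
  unfolding cl_def by (intro min.mono max.mono) auto

lemma cl_tele:
  fixes a :: real assumes "0 < a"
  shows "(\<Sum>k\<le>N. cl (a * 2 ^ k) s) = min (a * 2 ^ N) (max (a/2) s) - a/2"
proof (induction N)
  case 0 then show ?case by (simp add: cl_def min_def max_def)
next
  case (Suc N)
  have "(1::real) \<le> 2 ^ N" by simp
  then have "a \<le> a * 2 ^ N" using assms by simp
  moreover have "a/2 < a" using assms by simp
  ultimately have pos: "a/2 < a * 2 ^ N" by linarith
  have gen: "0 < b \<Longrightarrow> b < T \<Longrightarrow> min ((2*T)/2) (max 0 (s - (2*T)/2)) = min (2*T) (max b s) - min T (max b s)" for b T :: real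
    by (simp add: min_def max_def)
  have "cl (a * 2 ^ Suc N) s = min (a * 2 ^ Suc N) (max (a/2) s) - min (a * 2 ^ N) (max (a/2) s)"
    using gen[OF _ pos] assms unfolding cl_def by (simp add: mult.commute mult.left_commute)
  then show ?case using Suc.IH by simp
qed

lemma sq_sum_le:
  fixes d :: "nat \<Rightarrow> real"
  assumes "finite I" "\<And>i. i \<in> I \<Longrightarrow> 0 \<le> d i"
  shows "(\<Sum>i\<in>I. (d i)\<^sup>2) \<le> (\<Sum>i\<in>I. d i)\<^sup>2"
proof -
  have "(\<Sum>i\<in>I. (d i)\<^sup>2) \<le> (\<Sum>i\<in>I. d i * (\<Sum>j\<in>I. d j))"
    unfolding power2_eq_square
    by (intro sum_mono mult_left_mono member_le_sum) (use assms in auto)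
  also have "\<dots> = (\<Sum>i\<in>I. d i)\<^sup>2" by (simp add: power2_eq_square sum_distrib_right)
  finally show ?thesis .
qed

lemma cl_sq_le_ord:
  fixes a :: real assumes "0 < a" "v \<le> u"
  shows "(\<Sum>k\<le>N. (cl (a * 2 ^ k) u - cl (a * 2 ^ k) v)\<^sup>2) \<le> (u - v)\<^sup>2"
proof -
  have "(\<Sum>k\<le>N. (cl (a * 2 ^ k) u - cl (a * 2 ^ k) v)\<^sup>2) \<le> (\<Sum>k\<le>N. cl (a * 2 ^ k) u - cl (a * 2 ^ k) v)\<^sup>2"
    by (rule sq_sum_le) (use assms cl_mono in auto)
  also have "(\<Sum>k\<le>N. cl (a * 2 ^ k) u - cl (a * 2 ^ k) v)
     = (min (a * 2 ^ N) (max (a/2) u) - a/2) - (min (a * 2 ^ N) (max (a/2) v) - a/2)"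
    by (simp add: sum_subtractf cl_tele[OF assms(1)])
  also have "(\<dots>)\<^sup>2 \<le> (u - v)\<^sup>2"
    using assms(2) by (intro power_mono) (auto simp: min_def max_def)
  finally show ?thesis .
qed

lemma cl_sq_le:
  fixes a :: real assumes "0 < a"
  shows "(\<Sum>k\<le>N. (cl (a * 2 ^ k) u - cl (a * 2 ^ k) v)\<^sup>2) \<le> (u - v)\<^sup>2"
proof (cases "v \<le> u")
  case True then show ?thesis using cl_sq_le_ord[OF assms] by blast
next
  case False
  then have "(\<Sum>k\<le>N. (cl (a * 2 ^ k) v - cl (a * 2 ^ k) u)\<^sup>2) \<le> (v - u)\<^sup>2"
    using cl_sq_le_ord[OF assms] by simp
  then show ?thesis by (simp add: power2_commute)
qed

lemma vk_eq:
  fixes t s :: real assumes "0 < t"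
  shows "min 1 (max 0 (2 * s / t - 1)) = (2 / t) * cl t s"
  using assms unfolding cl_def
  by (auto simp: min_def max_def field_simps)




context fchain begin

lemma E_sum_cl:
  assumes "0 < a"
  shows "(\<Sum>k\<le>N. E (\<lambda>x. cl (a * 2 ^ k) (w x))) \<le> E w"
proof -
  have "(\<Sum>k\<le>N. E (\<lambda>x. cl (a * 2 ^ k) (w x)))
      = (1/2) * (\<Sum>x\<in>S. \<Sum>y\<in>S. \<mu> x * p x y * (\<Sum>k\<le>N. (cl (a * 2 ^ k) (w x) - cl (a * 2 ^ k) (w y))\<^sup>2))"
    unfolding E_def by (simp add: sum_distrib_left sum.swap[of _ "{..N}"])
  also have "\<dots> \<le> (1/2) * (\<Sum>x\<in>S. \<Sum>y\<in>S. \<mu> x * p x y * (w x - w y)\<^sup>2)"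
    using mupos p_nonneg cl_sq_le[OF assms]
    by (intro mult_left_mono sum_mono mult_left_mono) (auto intro: mult_nonneg_nonneg less_imp_le)
  finally show ?thesis by (simp add: E_def)
qed

lemma mazya:
  assumes TS: "T \<subseteq> S" and kap: "0 < \<kappa>"
    and cap: "\<And>A v. A \<subseteq> T \<Longrightarrow> A \<noteq> {} \<Longrightarrow> (\<And>x. x\<in>A \<Longrightarrow> v x = 1) \<Longrightarrow> (\<And>x. x\<in>D \<Longrightarrow> v x = 0)
       \<Longrightarrow> \<kappa> * sum \<mu> A \<le> E v"
    and wnn: "\<And>x. x \<in> T \<Longrightarrow> 0 \<le> w x" and wD: "\<And>x. x\<in>D \<Longrightarrow> w x = 0"
  shows "\<kappa> * (\<Sum>x\<in>T. \<mu> x * (w x)\<^sup>2) \<le> 16 * E w"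
proof (cases "\<forall>x\<in>T. w x = 0")
  case True
  then have "(\<Sum>x\<in>T. \<mu> x * (w x)\<^sup>2) = 0" by simp
  then show ?thesis using E_nonneg[of w] by simp
next
  case False
  have finT: "finite T" using finS TS finite_subset by blast
  define Pos where "Pos = {x\<in>T. 0 < w x}"
  have Posne: "Pos \<noteq> {}" using False wnn unfolding Pos_def by force
  have finPos: "finite Pos" using finT unfolding Pos_def by simp
  define a where "a = Min (w ` Pos)"
  have apos: "0 < a" unfolding a_def using finPos Posne by (simp add: Pos_def)
  have ale: "x \<in> T \<Longrightarrow> 0 < w x \<Longrightarrow> a \<le> w x" for x
    unfolding a_def using finPos by (intro Min_le) (auto simp: Pos_def)
  define B where "B = (\<Sum>x\<in>T. \<bar>w x\<bar>) + 1"
  obtain n where n: "B / a < 2 ^ n" using real_arch_pow[of 2 "B / a"] by auto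
  define N where "N = n"
  have wlt: "x \<in> T \<Longrightarrow> w x < a * 2 ^ Suc N" for x
  proof -
    assume x: "x \<in> T"
    have "w x \<le> (\<Sum>x\<in>T. \<bar>w x\<bar>)" using member_le_sum[of x T "\<lambda>x. \<bar>w x\<bar>"] finT x by force
    then have "w x < B" by (simp add: B_def)
    also have "B < a * 2 ^ n" using n apos by (simp add: pos_divide_less_eq mult.commute)
    also have "a * 2 ^ n \<le> a * 2 ^ Suc N" using apos by (simp add: N_def)
    finally show ?thesis .
  qed
  define t where "t k = a * 2 ^ k" for k :: nat
  have tpos: "0 < t k" for k using apos by (simp add: t_def)
  define Ak where "Ak k = {x\<in>T. t k \<le> w x}" for k
  define vk where "vk k x = min 1 (max 0 (2 * w x / t k - 1))" for k x
  have pw: "(w x)\<^sup>2 \<le> 4 * (\<Sum>k\<le>N. (t k)\<^sup>2 * (if t k \<le> w x then 1 else 0))" if x: "x \<in> T" for x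
  proof (cases "w x = 0")
    case True then show ?thesis by (simp add: sum_nonneg)
  next
    case False
    then have "0 < w x" using wnn[OF x] by simp
    then obtain k where k: "k \<le> N" "a * 2 ^ k \<le> w x" "w x < a * 2 ^ Suc k"
      using dyadic[OF apos ale[OF x] wlt[OF x]] by blast
    have "(w x)\<^sup>2 \<le> (2 * t k)\<^sup>2" using k \<open>0 < w x\<close> by (intro power_mono) (auto simp: t_def)
    also have "\<dots> = 4 * ((t k)\<^sup>2 * (if t k \<le> w x then 1 else 0))" using k by (simp add: t_def power2_eq_square)
    also have "\<dots> \<le> 4 * (\<Sum>k\<le>N. (t k)\<^sup>2 * (if t k \<le> w x then 1 else 0))"
      using k by (intro mult_left_mono member_le_sum) auto
    finally show ?thesis .
  qed
  have step1: "(\<Sum>x\<in>T. \<mu> x * (w x)\<^sup>2) \<le> 4 * (\<Sum>k\<le>N. (t k)\<^sup>2 * sum \<mu> (Ak k))"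
  proof -
    have "(\<Sum>x\<in>T. \<mu> x * (w x)\<^sup>2) \<le> (\<Sum>x\<in>T. \<mu> x * (4 * (\<Sum>k\<le>N. (t k)\<^sup>2 * (if t k \<le> w x then 1 else 0))))"
      using pw mupos TS by (intro sum_mono mult_left_mono) (auto intro: less_imp_le)
    also have "\<dots> = 4 * (\<Sum>k\<le>N. (t k)\<^sup>2 * (\<Sum>x\<in>T. if t k \<le> w x then \<mu> x else 0))"
      by (simp add: sum_distrib_left sum_distrib_right sum.swap[of _ T] algebra_simps if_distrib cong: if_cong)
    also have "\<dots> = 4 * (\<Sum>k\<le>N. (t k)\<^sup>2 * sum \<mu> (Ak k))"
      unfolding Ak_def using finT by (simp add: sum.inter_filter)
    finally show ?thesis .
  qed
  have step2: "\<kappa> * sum \<mu> (Ak k) \<le> 4 * E (\<lambda>x. cl (t k) (w x)) / (t k)\<^sup>2" for k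
  proof -
    have "\<kappa> * sum \<mu> (Ak k) \<le> E (vk k)"
    proof (cases "Ak k = {}")
      case True then show ?thesis using E_nonneg by simp
    next
      case False
      show ?thesis
      proof (rule cap)
        show "Ak k \<subseteq> T" "Ak k \<noteq> {}" using False by (auto simp: Ak_def)
        fix x assume "x \<in> Ak k"
        then have "t k \<le> w x" by (simp add: Ak_def)
        then have "1 \<le> 2 * w x / t k - 1" using tpos[of k] by (simp add: field_simps)
        then show "vk k x = 1" by (simp add: vk_def)
      next
        fix x assume "x \<in> D" then show "vk k x = 0" using wD by (simp add: vk_def)
      qed
    qed
    also have "E (vk k) = (2 / t k)\<^sup>2 * E (\<lambda>x. cl (t k) (w x))"
      unfolding vk_def vk_eq[OF tpos] by (rule E_scale)
    also have "\<dots> = 4 * E (\<lambda>x. cl (t k) (w x)) / (t k)\<^sup>2" by (simp add: power_divide)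
    finally show ?thesis .
  qed
  define sk where "sk k = sum \<mu> (Ak k)" for k
  have "\<kappa> * (\<Sum>x\<in>T. \<mu> x * (w x)\<^sup>2) \<le> \<kappa> * (4 * (\<Sum>k\<le>N. (t k)\<^sup>2 * sk k))"
    using mult_left_mono[OF step1 less_imp_le[OF kap]] by (simp add: sk_def)
  also have "\<dots> = 4 * (\<Sum>k\<le>N. (t k)\<^sup>2 * (\<kappa> * sk k))"
    by (simp add: sum_distrib_left algebra_simps)
  also have "\<dots> = 4 * (\<Sum>k\<le>N. (t k)\<^sup>2 * (\<kappa> * sum \<mu> (Ak k)))" by (simp add: sk_def)
  also have "\<dots> \<le> 4 * (\<Sum>k\<le>N. (t k)\<^sup>2 * (4 * E (\<lambda>x. cl (t k) (w x)) / (t k)\<^sup>2))"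
    using step2 by (intro mult_left_mono sum_mono) auto
  also have "\<dots> = 16 * (\<Sum>k\<le>N. E (\<lambda>x. cl (a * 2 ^ k) (w x)))"
    using tpos apos by (simp add: sum_distrib_left t_def)
  also have "\<dots> \<le> 16 * E w" using E_sum_cl[OF apos] by simp
  finally show ?thesis .
qed

end



lemma scalar_ent:
  fixes t L :: real
  assumes t: "0 \<le> t" and L1: "1 \<le> L" and L2: "1 \<le> t \<Longrightarrow> 1 + 2 * ln t \<le> L"
  shows "t\<^sup>2 * ln (t\<^sup>2) - t\<^sup>2 + 1 \<le> 3 * (t - 1)\<^sup>2 * L"
proof -
  consider "t = 0" | "0 < t" "t \<le> 1" | "1 \<le> t" using t by linarith
  then show ?thesis
  proof cases
    case 1 then show ?thesis using L1 by simp
  next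
    case 2
    have lt: "ln t \<le> t - 1" using 2(1) by (rule ln_le_minus_one)
    have l2: "ln (t\<^sup>2) = 2 * ln t" using 2 by (simp add: ln_realpow)
    have "t\<^sup>2 * ln (t\<^sup>2) \<le> t\<^sup>2 * (2 * (t - 1))"
      unfolding l2 using lt by (intro mult_left_mono) auto
    then have "t\<^sup>2 * ln (t\<^sup>2) - t\<^sup>2 + 1 \<le> (t - 1)\<^sup>2 * (2 * t + 1)"
      by (simp add: power2_eq_square algebra_simps)
    also have "\<dots> \<le> (t - 1)\<^sup>2 * 3" using 2 by (intro mult_left_mono) auto
    also have "\<dots> \<le> 3 * (t - 1)\<^sup>2 * L" using mult_left_mono[OF L1, of "3 * (t - 1)\<^sup>2"] by (simp add: mult.commute)
    finally show ?thesis .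
  next
    case 3
    have lt: "ln t \<le> t - 1" using 3 by (intro ln_le_minus_one) simp
    have l0: "0 \<le> ln t" using 3 by simp
    have l2: "ln (t\<^sup>2) = 2 * ln t" using 3 by (simp add: ln_realpow)
    have a: "(4 * (t - 1) + 2) * ln t \<le> (4 * (t - 1) + 2) * (t - 1)"
      using 3 lt by (intro mult_left_mono) auto
    have eq: "t\<^sup>2 * ln (t\<^sup>2) - t\<^sup>2 + 1 = 2 * (t - 1)\<^sup>2 * ln t + (4 * (t - 1) + 2) * ln t - t\<^sup>2 + 1"
      unfolding l2 by (simp add: power2_eq_square algebra_simps)
    have "t\<^sup>2 * ln (t\<^sup>2) - t\<^sup>2 + 1 \<le> (t - 1)\<^sup>2 * (3 + 2 * ln t)"
      unfolding eq using a by (simp add: power2_eq_square algebra_simps)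
    also have "\<dots> \<le> (t - 1)\<^sup>2 * (3 * (1 + 2 * ln t))" using l0 by (intro mult_left_mono) auto
    also have "\<dots> \<le> (t - 1)\<^sup>2 * (3 * L)" using L2[OF 3] by (intro mult_left_mono) auto
    finally show ?thesis by (simp add: algebra_simps)
  qed
qed

lemma ent_bound:
  fixes X :: "nat set" and \<nu> h :: "nat \<Rightarrow> real"
  assumes finX: "finite X" and \<nu>pos: "\<And>x. x \<in> X \<Longrightarrow> 0 < \<nu> x" and \<nu>sum: "sum \<nu> X = 1"
    and hnn: "\<And>x. x \<in> X \<Longrightarrow> 0 \<le> h x"
    and Cm: "\<And>x. x \<in> X \<Longrightarrow> ln (1 + exp 2 / \<nu> x) \<le> Cm"
  shows "(\<Sum>x\<in>X. \<nu> x * ((h x)\<^sup>2 * ln ((h x)\<^sup>2))) - (\<Sum>x\<in>X. \<nu> x * (h x)\<^sup>2) * ln (\<Sum>x\<in>X. \<nu> x * (h x)\<^sup>2)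
     \<le> 6 * Cm * ((\<Sum>x\<in>X. \<nu> x * (h x)\<^sup>2) - (\<Sum>x\<in>X. \<nu> x * h x)\<^sup>2)"
proof -
  define s where "s = (\<Sum>x\<in>X. \<nu> x * (h x)\<^sup>2)"
  define a where "a = (\<Sum>x\<in>X. \<nu> x * h x)"
  have s0: "0 \<le> s" unfolding s_def using \<nu>pos by (intro sum_nonneg mult_nonneg_nonneg) (auto intro: less_imp_le)
  have a0: "0 \<le> a" unfolding a_def using \<nu>pos hnn by (intro sum_nonneg mult_nonneg_nonneg) (auto intro: less_imp_le)
  have var: "a\<^sup>2 \<le> s"
  proof -
    have "0 \<le> (\<Sum>x\<in>X. \<nu> x * (h x - a)\<^sup>2)" using \<nu>pos by (intro sum_nonneg mult_nonneg_nonneg) (auto intro: less_imp_le)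
    also have "\<dots> = (\<Sum>x\<in>X. \<nu> x * (h x)\<^sup>2) - 2 * a * (\<Sum>x\<in>X. \<nu> x * h x) + a\<^sup>2 * sum \<nu> X"
      by (simp add: power2_eq_square algebra_simps sum.distrib sum_subtractf sum_distrib_left)
    also have "\<dots> = s - 2 * a * a + a\<^sup>2 * sum \<nu> X" by (simp flip: s_def a_def)
    finally show ?thesis using \<nu>sum by (simp add: power2_eq_square)
  qed
  have \<nu>le1: "x \<in> X \<Longrightarrow> \<nu> x \<le> 1" for x
    using member_le_sum[of x X \<nu>] \<nu>pos finX \<nu>sum by (auto intro: less_imp_le)
  have Cm0: "X \<noteq> {}" using \<nu>sum by auto
  show ?thesis
  proof (cases "s = 0")
    case True
    have "\<forall>x\<in>X. \<nu> x * (h x)\<^sup>2 = 0"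
    proof -
      have "\<And>x. x \<in> X \<Longrightarrow> 0 \<le> \<nu> x * (h x)\<^sup>2" using \<nu>pos by (simp add: less_imp_le)
      then show ?thesis using True sum_nonneg_eq_0_iff[OF finX, of "\<lambda>x. \<nu> x * (h x)\<^sup>2"] unfolding s_def
        by blast
    qed
    then have h0: "x \<in> X \<Longrightarrow> h x = 0" for x using \<nu>pos by force
    then show ?thesis by (simp add: h0)
  next
    case False
    then have spos: "0 < s" using s0 by simp
    define q where "q = sqrt s"
    have qpos: "0 < q" using spos by (simp add: q_def)
    have qq: "q\<^sup>2 = s" using s0 by (simp add: q_def)
    define t where "t x = h x / q" for x
    have t0: "x \<in> X \<Longrightarrow> 0 \<le> t x" for x using hnn qpos by (simp add: t_def)
    have ht: "h x = q * t x" for x using qpos by (simp add: t_def)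
    have sumt2: "(\<Sum>x\<in>X. \<nu> x * (t x)\<^sup>2) = 1"
    proof -
      have "(\<Sum>x\<in>X. \<nu> x * (t x)\<^sup>2) = (\<Sum>x\<in>X. \<nu> x * (h x)\<^sup>2) / q\<^sup>2"
        by (simp add: t_def power_divide sum_divide_distrib)
      then show ?thesis using qq spos by (simp add: s_def)
    qed
    have pt: "(h x)\<^sup>2 * ln ((h x)\<^sup>2) = s * (t x)\<^sup>2 * ln s + s * ((t x)\<^sup>2 * ln ((t x)\<^sup>2))" if x: "x \<in> X" for x
    proof (cases "t x = 0")
      case True then show ?thesis by (simp add: ht)
    next
      case False
      then have "0 < (t x)\<^sup>2" by simp
      then have "ln ((h x)\<^sup>2) = ln s + ln ((t x)\<^sup>2)"
        using spos by (simp add: ht power_mult_distrib qq ln_mult)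
      then show ?thesis by (simp add: ht power_mult_distrib qq algebra_simps)
    qed
    have "(\<Sum>x\<in>X. \<nu> x * ((h x)\<^sup>2 * ln ((h x)\<^sup>2))) - s * ln s
        = s * ln s * (\<Sum>x\<in>X. \<nu> x * (t x)\<^sup>2) + s * (\<Sum>x\<in>X. \<nu> x * ((t x)\<^sup>2 * ln ((t x)\<^sup>2))) - s * ln s"
      by (simp add: pt sum.distrib sum_distrib_left algebra_simps)
    also have "\<dots> = s * (\<Sum>x\<in>X. \<nu> x * ((t x)\<^sup>2 * ln ((t x)\<^sup>2) - (t x)\<^sup>2 + 1))"
      using sumt2 \<nu>sum by (simp add: algebra_simps sum.distrib sum_subtractf)
    also have "\<dots> \<le> s * (\<Sum>x\<in>X. \<nu> x * (3 * (t x - 1)\<^sup>2 * Cm))"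
    proof (intro mult_left_mono[OF _ s0] sum_mono)
      fix x assume x: "x \<in> X"
      define L where "L = ln (1 + exp 2 / \<nu> x)"
      have \<nu>x: "0 < \<nu> x" "\<nu> x \<le> 1" using \<nu>pos[OF x] \<nu>le1[OF x] by auto
      have "exp 2 \<le> exp 2 / \<nu> x" using \<nu>x by (simp add: le_divide_eq)
      moreover have "0 < exp 2 / \<nu> x" using \<nu>x by simp
      ultimately have "ln (exp 2) \<le> L" unfolding L_def by (subst ln_le_cancel_iff) auto
      then have L1: "1 \<le> L" by simp
      have L2: "1 + 2 * ln (t x) \<le> L" if t1: "1 \<le> t x"
      proof -
        have "\<nu> x * (h x)\<^sup>2 \<le> s" unfolding s_def
          using member_le_sum[of x X "\<lambda>x. \<nu> x * (h x)\<^sup>2"] finX x \<nu>pos by (simp add: less_imp_le)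
        then have "\<nu> x * (t x)\<^sup>2 \<le> 1" using spos by (simp add: ht power_mult_distrib qq)
        then have tt: "(t x)\<^sup>2 \<le> 1 / \<nu> x" using \<nu>x by (simp add: le_divide_eq mult.commute)
        have "1 + 2 * ln (t x) = ln (exp 1 * (t x)\<^sup>2)" using t1 by (simp add: ln_mult ln_realpow)
        also have "\<dots> \<le> ln (exp 1 * (1 / \<nu> x))"
        proof (subst ln_le_cancel_iff)
          show "0 < exp 1 * (t x)\<^sup>2" using t1 by simp
          show "0 < exp 1 * (1 / \<nu> x)" using \<nu>x by simp
          show "exp 1 * (t x)\<^sup>2 \<le> exp 1 * (1 / \<nu> x)" using tt by (intro mult_left_mono) auto
        qed
        also have "\<dots> \<le> L"
        proof -
          have e12: "exp 1 \<le> exp (2::real)" by simp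
          have fin: "exp 1 \<le> \<nu> x + exp 2" using e12 \<nu>x by linarith
          show ?thesis unfolding L_def using \<nu>x fin
            by (subst ln_le_cancel_iff) (auto simp: field_simps add_pos_pos)
        qed
        finally show ?thesis .
      qed
      have "(t x)\<^sup>2 * ln ((t x)\<^sup>2) - (t x)\<^sup>2 + 1 \<le> 3 * (t x - 1)\<^sup>2 * L"
        by (rule scalar_ent[OF t0[OF x] L1 L2])
      also have "\<dots> \<le> 3 * (t x - 1)\<^sup>2 * Cm" using Cm[OF x] by (intro mult_left_mono) (auto simp: L_def)
      finally show "\<nu> x * ((t x)\<^sup>2 * ln ((t x)\<^sup>2) - (t x)\<^sup>2 + 1) \<le> \<nu> x * (3 * (t x - 1)\<^sup>2 * Cm)"
        using \<nu>pos[OF x] by (intro mult_left_mono) auto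
    qed
    also have "\<dots> = 3 * Cm * (\<Sum>x\<in>X. \<nu> x * (h x - q)\<^sup>2)"
    proof -
      have "(h x - q)\<^sup>2 = s * (t x - 1)\<^sup>2" for x by (simp add: ht qq[symmetric] power2_eq_square algebra_simps)
      then show ?thesis by (simp add: sum_distrib_left algebra_simps)
    qed
    also have "3 * Cm * (\<Sum>x\<in>X. \<nu> x * (h x - q)\<^sup>2) = 3 * Cm * (2 * q * (q - a))"
    proof -
      have "(\<Sum>x\<in>X. \<nu> x * (h x - q)\<^sup>2) = (\<Sum>x\<in>X. \<nu> x * (h x)\<^sup>2) - 2 * q * (\<Sum>x\<in>X. \<nu> x * h x) + q\<^sup>2 * sum \<nu> X"
        by (simp add: power2_eq_square algebra_simps sum.distrib sum_subtractf sum_distrib_left)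
      also have "\<dots> = s - 2 * q * a + q\<^sup>2 * sum \<nu> X" by (simp flip: s_def a_def)
      finally have "(\<Sum>x\<in>X. \<nu> x * (h x - q)\<^sup>2) = s - 2 * q * a + q\<^sup>2 * sum \<nu> X" .
      moreover have "s - 2 * q * a + q\<^sup>2 * sum \<nu> X = 2 * q * (q - a)" using qq \<nu>sum
        by (simp add: power2_eq_square algebra_simps)
      ultimately show ?thesis by simp
    qed
    also have "3 * Cm * (2 * q * (q - a)) \<le> 3 * Cm * (2 * (s - a\<^sup>2))"
    proof -
      obtain x0 where "x0 \<in> X" using Cm0 by auto
      have "exp 2 \<le> exp 2 / \<nu> x0" using \<nu>pos[OF \<open>x0 \<in> X\<close>] \<nu>le1[OF \<open>x0 \<in> X\<close>] by (simp add: le_divide_eq)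
      then have "0 \<le> ln (1 + exp 2 / \<nu> x0)" by (intro ln_ge_zero) (auto intro: add_increasing2 order_trans[OF _ \<open>exp 2 \<le> _\<close>])
      then have Cmnn: "0 \<le> Cm" using Cm[OF \<open>x0 \<in> X\<close>] by linarith
      have "a \<le> q" unfolding q_def using var a0 real_le_rsqrt by blast
      then have "q * (q - a) \<le> (q + a) * (q - a)" using a0 by (intro mult_right_mono) auto
      then have "2 * q * (q - a) \<le> 2 * (s - a\<^sup>2)" using qq by (simp add: power2_eq_square algebra_simps)
      then show ?thesis using Cmnn by (intro mult_left_mono) auto
    qed
    finally have main: "(\<Sum>x\<in>X. \<nu> x * ((h x)\<^sup>2 * ln ((h x)\<^sup>2))) - s * ln s \<le> 3 * Cm * (2 * (s - a\<^sup>2))" .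
    have "3 * Cm * (2 * (s - a\<^sup>2)) = 6 * Cm * (s - a\<^sup>2)" by simp
    then show ?thesis using main unfolding s_def a_def by linarith
  qed
qed




context fchain begin

lemma dirichlet_E: "dirichlet S P \<mu> f = E f"
proof -
  have "finite (S \<times> S)" using finS by simp
  then have "dirichlet S P \<mu> f = (1/2) * (\<Sum>(x,y)\<in>S \<times> S. \<mu> x * p x y * (f x - f y)\<^sup>2)"
    unfolding dirichlet_def by simp
  also have "\<dots> = E f" unfolding E_def by (simp add: sum.cartesian_product)
  finally show ?thesis .
qed

lemma finsub: "A \<subseteq> S \<Longrightarrow> finite A"
  by (rule finite_subset[OF _ finS])

lemma mass_sum: "A \<subseteq> S \<Longrightarrow> mass \<mu> A = sum \<mu> A"
  unfolding mass_def by (simp add: finsub)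

lemma expect_sum: "A \<subseteq> S \<Longrightarrow> expect \<mu> A g = (\<Sum>x\<in>A. \<mu> x / mass \<mu> A * g x)"
  unfolding expect_def by (simp add: finsub)

lemma E_mono_pt:
  assumes "\<And>x y. x \<in> S \<Longrightarrow> y \<in> S \<Longrightarrow> \<mu> x * p x y * (u x - u y)\<^sup>2 \<le> g x y"
  shows "E u \<le> (1/2) * (\<Sum>x\<in>S. \<Sum>y\<in>S. g x y)"
  unfolding E_def
  apply (rule mult_left_mono)
   apply (rule sum_mono)
   apply (rule sum_mono)
  using assms by auto

lemma E_lip:
  assumes "\<And>x y. \<bar>u x - u y\<bar> \<le> \<bar>f x - f y\<bar>"
  shows "E u \<le> E f"
proof -
  have "E u \<le> (1/2) * (\<Sum>x\<in>S. \<Sum>y\<in>S. \<mu> x * p x y * (f x - f y)\<^sup>2)"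
  proof (rule E_mono_pt)
    fix x y assume x: "x \<in> S" and "y \<in> S"
    have "(u x - u y)\<^sup>2 \<le> (f x - f y)\<^sup>2" using assms[of x y]
      by (metis abs_ge_zero power2_abs power_mono)
    then show "\<mu> x * p x y * (u x - u y)\<^sup>2 \<le> \<mu> x * p x y * (f x - f y)\<^sup>2"
      using mupos[OF x] p_nonneg by (intro mult_left_mono) auto
  qed
  then show ?thesis by (simp add: E_def)
qed

lemma E_cut:
  assumes DS: "D \<subseteq> S"
  shows "E (\<lambda>x. if x \<in> D then 0 else u x) \<le> 2 * E u + 4 * (\<Sum>x\<in>D. \<mu> x * (u x)\<^sup>2)"
proof -
  define d where "d x = (if x \<in> D then u x else 0)" for x
  have wd: "(\<lambda>x. if x \<in> D then 0 else u x) = (\<lambda>x. u x + (- d x))" by (auto simp: d_def)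
  have "E (\<lambda>x. u x + (- d x)) = E u + 2 * EE u (\<lambda>x. - d x) + E (\<lambda>x. - d x)" by (rule E_add)
  also have "\<dots> \<le> 2 * E u + 2 * E (\<lambda>x. - d x)"
  proof -
    have "0 \<le> E (\<lambda>x. u x + (- (- d x)))" by (rule E_nonneg)
    also have "\<dots> = E u + 2 * EE u (\<lambda>x. - (- d x)) + E (\<lambda>x. - (- d x))" by (rule E_add)
    finally have "0 \<le> E u + 2 * EE u d + E d" by simp
    moreover have "EE u (\<lambda>x. - d x) = - EE u d"
    proof -
      have pt: "\<mu> x * p x y * ((u x - u y) * (- d x - - d y)) = - (\<mu> x * p x y * ((u x - u y) * (d x - d y)))" for x y
        by (simp add: algebra_simps)
      show ?thesis unfolding EE_def by (simp only: pt sum_negf)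
    qed
    moreover have "E (\<lambda>x. - d x) = E d" using E_scale[of "-1" d] by simp
    ultimately show ?thesis by linarith
  qed
  also have "E (\<lambda>x. - d x) \<le> 2 * (\<Sum>x\<in>D. \<mu> x * (u x)\<^sup>2)"
  proof -
    have "E (\<lambda>x. - d x) = E d" using E_scale[of "-1" d] by simp
    also have "\<dots> \<le> (1/2) * (\<Sum>x\<in>S. \<Sum>y\<in>S. \<mu> x * p x y * (2 * (d x)\<^sup>2 + 2 * (d y)\<^sup>2))"
    proof (rule E_mono_pt)
      fix x y assume x: "x \<in> S" and "y \<in> S"
      have "(d x - d y)\<^sup>2 \<le> 2 * (d x)\<^sup>2 + 2 * (d y)\<^sup>2"
        using sum_squares_ge_zero[of "d x + d y" 0] by (simp add: power2_eq_square algebra_simps)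
      then show "\<mu> x * p x y * (d x - d y)\<^sup>2 \<le> \<mu> x * p x y * (2 * (d x)\<^sup>2 + 2 * (d y)\<^sup>2)"
        using mupos[OF x] p_nonneg by (intro mult_left_mono) auto
    qed
    also have "\<dots> = (\<Sum>x\<in>S. \<Sum>y\<in>S. \<mu> x * p x y * (d x)\<^sup>2) + (\<Sum>x\<in>S. \<Sum>y\<in>S. \<mu> x * p x y * (d y)\<^sup>2)"
    proof -
      have pt: "\<mu> x * p x y * (2 * (d x)\<^sup>2 + 2 * (d y)\<^sup>2) = 2 * (\<mu> x * p x y * (d x)\<^sup>2) + 2 * (\<mu> x * p x y * (d y)\<^sup>2)" for x y
        by (simp add: algebra_simps)
      show ?thesis by (simp only: pt sum.distrib sum_distrib_left[symmetric]) simp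
    qed
    also have "(\<Sum>x\<in>S. \<Sum>y\<in>S. \<mu> x * p x y * (d x)\<^sup>2) = (\<Sum>x\<in>S. \<mu> x * (d x)\<^sup>2)"
    proof (rule sum.cong[OF refl])
      fix x assume x: "x \<in> S"
      have "(\<Sum>y\<in>S. \<mu> x * p x y * (d x)\<^sup>2) = (\<Sum>y\<in>S. (\<mu> x * (d x)\<^sup>2) * p x y)"
        by (simp add: algebra_simps)
      also have "\<dots> = \<mu> x * (d x)\<^sup>2 * (\<Sum>y\<in>S. p x y)" by (rule sum_distrib_left[symmetric])
      finally have "(\<Sum>y\<in>S. \<mu> x * p x y * (d x)\<^sup>2) = \<mu> x * (d x)\<^sup>2 * (\<Sum>y\<in>S. p x y)" .
      then show "(\<Sum>y\<in>S. \<mu> x * p x y * (d x)\<^sup>2) = \<mu> x * (d x)\<^sup>2" using sum_p[OF x] by simp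
    qed
    also have "(\<Sum>x\<in>S. \<Sum>y\<in>S. \<mu> x * p x y * (d y)\<^sup>2) = (\<Sum>y\<in>S. \<mu> y * (d y)\<^sup>2)"
    proof -
      have "(\<Sum>x\<in>S. \<Sum>y\<in>S. \<mu> x * p x y * (d y)\<^sup>2) = (\<Sum>y\<in>S. (\<Sum>x\<in>S. \<mu> x * p x y) * (d y)\<^sup>2)"
        by (subst sum.swap) (simp add: sum_distrib_right)
      then show ?thesis by (simp add: stat)
    qed
    also have "(\<Sum>x\<in>S. \<mu> x * (d x)\<^sup>2) = (\<Sum>x\<in>D. \<mu> x * (u x)\<^sup>2)"
    proof -
      have "(\<Sum>x\<in>S. \<mu> x * (d x)\<^sup>2) = (\<Sum>x\<in>S. if x \<in> D then \<mu> x * (u x)\<^sup>2 else 0)"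
        by (intro sum.cong) (auto simp: d_def)
      then show ?thesis using sum_if_sub[OF finS DS] by simp
    qed
    finally show ?thesis by simp
  qed
  finally show ?thesis unfolding wd by simp
qed

lemma E0_const:
  assumes E0: "E f = 0" and x: "x \<in> S" and y: "y \<in> S"
  shows "f x = f y"
proof (rule ccontr)
  assume ne: "f x \<noteq> f y"
  define W where "W = {z\<in>S. f z = f x}"
  have tnn: "z \<in> S \<Longrightarrow> 0 \<le> \<mu> z * p z z' * (f z - f z')\<^sup>2" for z z'
    by (intro mult_nonneg_nonneg) (auto simp: p_nonneg less_imp_le mupos)
  have inner: "z \<in> S \<Longrightarrow> 0 \<le> (\<Sum>z'\<in>S. \<mu> z * p z z' * (f z - f z')\<^sup>2)" for z
    using tnn by (intro sum_nonneg) auto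
  have "(\<Sum>z\<in>S. \<Sum>z'\<in>S. \<mu> z * p z z' * (f z - f z')\<^sup>2) = 0" using E0 by (simp add: E_def)
  then have z1: "\<forall>z\<in>S. (\<Sum>z'\<in>S. \<mu> z * p z z' * (f z - f z')\<^sup>2) = 0"
    using sum_nonneg_eq_0_iff[OF finS, of "\<lambda>z. \<Sum>z'\<in>S. \<mu> z * p z z' * (f z - f z')\<^sup>2"] inner by simp
  have zero: "z \<in> S \<Longrightarrow> z' \<in> S \<Longrightarrow> \<mu> z * p z z' * (f z - f z')\<^sup>2 = 0" for z z'
  proof -
    assume zS: "z \<in> S" and z'S: "z' \<in> S"
    have "\<forall>z'\<in>S. \<mu> z * p z z' * (f z - f z')\<^sup>2 = 0"
      using sum_nonneg_eq_0_iff[OF finS, of "\<lambda>z'. \<mu> z * p z z' * (f z - f z')\<^sup>2"] tnn[OF zS] z1 zS by simp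
    then show ?thesis using z'S by blast
  qed
  have Wc: "set_pmf (P z) \<subseteq> W" if z: "z \<in> W" for z
  proof
    fix z' assume z': "z' \<in> set_pmf (P z)"
    have zS: "z \<in> S" using z by (simp add: W_def)
    have z'S: "z' \<in> S" using closedS[OF zS] z' by auto
    have "p z z' > 0" using z' by (simp add: trans_p_def pmf_positive)
    then have "(f z - f z')\<^sup>2 = 0" using zero[OF zS z'S] mupos[OF zS] by simp
    then show "z' \<in> W" using z z'S by (simp add: W_def)
  qed
  show False using closed_contra[OF Wc _ _ y] x ne unfolding W_def by auto
qed

end



locale mprob = fchain +
  fixes K :: nat and M Sp :: "nat \<Rightarrow> nat set" and \<rho> :: real
  assumes K2: "2 \<le> K" and msets: "metastable_sets S K M" and rhopos: "0 < \<rho>"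
    and rhom: "rho_metastable S P \<mu> K M \<rho>" and part: "metastable_partition S P K M Sp"
begin

lemma M_ne: "j < K \<Longrightarrow> M j \<noteq> {}" using msets by (simp add: metastable_sets_def)
lemma M_S: "j < K \<Longrightarrow> M j \<subseteq> S" using msets by (simp add: metastable_sets_def)
lemma M_disj: "i < K \<Longrightarrow> j < K \<Longrightarrow> i \<noteq> j \<Longrightarrow> M i \<inter> M j = {}"
  using msets by (simp add: metastable_sets_def)
lemma Sp_S: "i < K \<Longrightarrow> Sp i \<subseteq> S" using part unfolding metastable_partition_def by blast
lemma Sp_disj: "i < K \<Longrightarrow> j < K \<Longrightarrow> i \<noteq> j \<Longrightarrow> Sp i \<inter> Sp j = {}"
  using part by (simp add: metastable_partition_def)
lemma Sp_valley: "i < K \<Longrightarrow> Sp i \<subseteq> valley S P K M i" using part by (simp add: metastable_partition_def)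
lemma M_Sp: "i < K \<Longrightarrow> M i \<subseteq> Sp i" using part by (simp add: metastable_partition_def)
lemma Mall_S: "Mall K M \<subseteq> S" using M_S by (auto simp: Mall_def)
lemma Mall_ne: "Mall K M \<inter> S \<noteq> {}"
proof -
  have "0 < K" using K2 by simp
  then obtain x where "x \<in> M 0" using M_ne by blast
  then show ?thesis using M_S[of 0] \<open>0 < K\<close> by (auto simp: Mall_def)
qed

lemma mass_pos: "A \<subseteq> S \<Longrightarrow> A \<noteq> {} \<Longrightarrow> 0 < mass \<mu> A"
proof -
  assume A: "A \<subseteq> S" "A \<noteq> {}"
  have "0 < sum \<mu> A" using A mupos by (intro sum_pos finsub) auto
  then show ?thesis using mass_sum[OF A(1)] by simp
qed

lemma prob_from_sum: "A \<subseteq> S \<Longrightarrow> prob_from \<mu> A h = (\<Sum>x\<in>A. \<mu> x * h x) / sum \<mu> A"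
  unfolding prob_from_def by (simp add: finsub mass_sum)

lemma pesc_pos: "0 < p_esc P \<mu> K M"
proof (rule ccontr)
  assume "\<not> 0 < p_esc P \<mu> K M"
  define g where "g j = prob_from \<mu> (M j) (hit_before P (Mall K M - M j) (M j))" for j
  have K0: "0 < K" "1 < K" using K2 by auto
  have "g 0 \<le> p_esc P \<mu> K M" unfolding p_esc_def g_def using K0 by (intro Max_ge) auto
  then have g0: "g 0 \<le> 0" using \<open>\<not> 0 < p_esc P \<mu> K M\<close> by simp
  define Q where "Q = Mall K M"
  define h where "h = hit_before P (Q - M 0) (M 0)"
  have M0S: "M 0 \<subseteq> S" using M_S K0 by simp
  have sum0: "(\<Sum>x\<in>M 0. \<mu> x * h x) \<le> 0"
  proof -
    have "(\<Sum>x\<in>M 0. \<mu> x * h x) / sum \<mu> (M 0) \<le> 0" using g0 unfolding g_def prob_from_sum[OF M0S] h_def Q_def .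
    moreover have "0 < sum \<mu> (M 0)" using mass_pos[OF M0S M_ne[OF K0(1)]] mass_sum[OF M0S] by simp
    ultimately show ?thesis by (simp add: divide_le_0_iff)
  qed
  have hz: "x \<in> M 0 \<Longrightarrow> h x = 0" for x
  proof -
    assume x: "x \<in> M 0"
    have nn: "\<And>y. y \<in> M 0 \<Longrightarrow> 0 \<le> \<mu> y * h y"
    proof -
      fix y assume "y \<in> M 0"
      then have "0 < \<mu> y" using mupos M0S by auto
      then show "0 \<le> \<mu> y * h y" using hit_nonneg by (simp add: h_def)
    qed
    have s0: "0 \<le> (\<Sum>y\<in>M 0. \<mu> y * h y)" using nn by (rule sum_nonneg)
    have "(\<Sum>y\<in>M 0. \<mu> y * h y) = 0" using s0 sum0 by linarith
    then have "\<forall>y\<in>M 0. \<mu> y * h y = 0"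
      using sum_nonneg_eq_0_iff[OF finsub[OF M0S] nn] by simp
    then show "h x = 0" using x mupos M0S by force
  qed
  define W where "W = {y\<in>S. y \<notin> Q - M 0 \<and> (y \<in> M 0 \<or> h y = 0)}"
  have Wc: "set_pmf (P y) \<subseteq> W" if y: "y \<in> W" for y
  proof
    fix z assume z: "z \<in> set_pmf (P y)"
    have yS: "y \<in> S" using y by (simp add: W_def)
    have zS: "z \<in> S" using closedS[OF yS] z by auto
    have hy: "h y = 0" using y hz by (auto simp: W_def)
    have tnn: "\<And>z'. z' \<in> S \<Longrightarrow> 0 \<le> p y z' * Hh (Q - M 0) (M 0) h z'"
      using hit_nonneg by (auto simp: p_nonneg Hh_def h_def intro!: mult_nonneg_nonneg)
    have "(\<Sum>z'\<in>S. p y z' * Hh (Q - M 0) (M 0) h z') = 0"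
      using hit_OS[OF yS, of "Q - M 0" "M 0"] hy by (simp add: h_def)
    then have "\<forall>z'\<in>S. p y z' * Hh (Q - M 0) (M 0) h z' = 0"
      using sum_nonneg_eq_0_iff[OF finS tnn] by simp
    then have "p y z * Hh (Q - M 0) (M 0) h z = 0" using zS by blast
    moreover have "p y z > 0" using z by (simp add: trans_p_def pmf_positive)
    ultimately have "Hh (Q - M 0) (M 0) h z = 0" by simp
    then show "z \<in> W" using zS unfolding W_def Hh_def by (auto split: if_splits)
  qed
  obtain x0 where x0: "x0 \<in> M 0" using M_ne[OF K0(1)] by auto
  obtain u where u: "u \<in> M 1" using M_ne[OF K0(2)] by auto
  have uQ: "u \<in> Q - M 0" using u K0 M_disj[of 1 0] by (auto simp: Q_def Mall_def)
  have "x0 \<in> W" using x0 M0S by (auto simp: W_def)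
  moreover have "u \<in> S" "u \<notin> W" using u uQ M_S[OF K0(2)] by (auto simp: W_def)
  ultimately show False using closed_contra[OF Wc] unfolding W_def by blast
qed

end



context mprob begin

lemma valley_bound:
  assumes i: "i < K" and x: "x \<in> Sp i"
  shows "1 \<le> real K * hit_before P (M i) (Mall K M - M i) x"
proof -
  define Q where "Q = Mall K M"
  define hj where "hj j = hit_before P (M j) (Q - M j) x" for j
  have xS: "x \<in> S" using Sp_S[OF i] x by auto
  have xv: "x \<in> valley S P K M i" using Sp_valley[OF i] x by auto
  have le: "hj j \<le> hj i" if j: "j < K" for j
  proof (cases "j = i")
    case True then show ?thesis by simp
  next
    case False
    have fin: "finite ((\<lambda>j. hit_before P (M j) (Mall K M - M j) x) ` ({..<K} - {i}))" by simp
    have "hj j \<le> Max ((\<lambda>j. hit_before P (M j) (Mall K M - M j) x) ` ({..<K} - {i}))"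
      unfolding hj_def Q_def using j False by (intro Max_ge[OF fin]) auto
    also have "\<dots> \<le> hj i" using xv unfolding valley_def hj_def Q_def by simp
    finally show ?thesis .
  qed
  have "(\<Sum>j<K. hj j) = 1" unfolding hj_def
    by (rule recur[OF M_disj Q_def[unfolded Mall_def] _ xS]) (use Mall_ne in \<open>auto simp: Q_def\<close>)
  moreover have "(\<Sum>j<K. hj j) \<le> (\<Sum>j<K. hj i)" using le by (intro sum_mono) auto
  ultimately show ?thesis by (simp add: hj_def Q_def)
qed

lemma cap_cond:
  assumes i: "i < K" and A: "A \<subseteq> Sp i - M i" "A \<noteq> {}"
    and v1: "\<And>x. x \<in> A \<Longrightarrow> v x = 1" and v0: "\<And>x. x \<in> M i \<Longrightarrow> v x = 0"
  shows "p_esc P \<mu> K M / \<rho> * sum \<mu> A \<le> E v"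
proof -
  define Q where "Q = Mall K M"
  define e where "e = hit_before P Q A"
  define hi where "hi = hit_before P (M i) (Q - M i)"
  have AS: "A \<subseteq> S" using A Sp_S[OF i] by auto
  have AQ: "A \<inter> Q = {}"
  proof (rule ccontr)
    assume "A \<inter> Q \<noteq> {}"
    then obtain x j where x: "x \<in> A" "j < K" "x \<in> M j" by (auto simp: Q_def Mall_def)
    show False
    proof (cases "j = i")
      case True then show False using x A by auto
    next
      case False
      then have "x \<in> Sp j \<inter> Sp i" using x A M_Sp[OF x(2)] by auto
      then show False using Sp_disj[OF x(2) i False] by auto
    qed
  qed
  have MiQ: "M i \<subseteq> Q" using i by (auto simp: Q_def Mall_def)
  have MiS: "M i \<subseteq> S" using M_S[OF i] .
  have finA: "finite A" using finsub[OF AS] .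
  have sA: "0 < sum \<mu> A" using A(2) AS mupos by (intro sum_pos finA) auto
  have enn: "x \<in> A \<Longrightarrow> 0 \<le> \<mu> x * e x" for x
    using mupos AS hit_nonneg[of Q A x] unfolding e_def by (auto intro: mult_nonneg_nonneg less_imp_le)
  have "A \<noteq> {} \<and> A \<subseteq> S - Q" using A(2) AS AQ by auto
  then have "real K * p_esc P \<mu> K M \<le> \<rho> * prob_from \<mu> A (hit_before P Q A)"
    using rhom unfolding rho_metastable_def Q_def by blast
  then have r1: "real K * p_esc P \<mu> K M \<le> \<rho> * ((\<Sum>x\<in>A. \<mu> x * e x) / sum \<mu> A)"
    unfolding prob_from_sum[OF AS] e_def .
  have r2: "(\<Sum>x\<in>A. \<mu> x * e x) \<le> real K * (\<Sum>x\<in>A. \<mu> x * e x * hi x)"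
  proof -
    have "(\<Sum>x\<in>A. \<mu> x * e x) \<le> (\<Sum>x\<in>A. \<mu> x * e x * (real K * hi x))"
    proof (rule sum_mono)
      fix x assume x: "x \<in> A"
      have "1 \<le> real K * hi x" unfolding hi_def Q_def using valley_bound[OF i] x A by auto
      then show "\<mu> x * e x \<le> \<mu> x * e x * (real K * hi x)"
        using enn[OF x] mult_left_mono[of 1 "real K * hi x" "\<mu> x * e x"] by simp
    qed
    also have "\<dots> = real K * (\<Sum>x\<in>A. \<mu> x * e x * hi x)"
      by (simp add: sum_distrib_left algebra_simps)
    finally show ?thesis .
  qed
  have r3: "(\<Sum>x\<in>A. \<mu> x * e x * hi x) = (\<Sum>y\<in>M i. \<mu> y * (1 - hit_before P Q A y))"
    unfolding e_def hi_def using esc_identity[of Q "M i" A] Mall_S MiQ AS AQ by (simp add: Q_def)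
  have r4: "(\<Sum>y\<in>M i. \<mu> y * (1 - hit_before P Q A y)) \<le> (\<Sum>y\<in>M i. \<mu> y * hit_before P A (M i) y)"
  proof (rule sum_mono)
    fix y assume y: "y \<in> M i"
    have yS: "y \<in> S" using y MiS by auto
    have "hit_before P Q A y + hit_before P A Q y = 1"
      using recur2[of Q A y] AQ Mall_ne yS by (auto simp: Q_def Int_commute)
    moreover have "hit_before P A Q y \<le> hit_before P A (M i) y"
      using hit_mono_B[of A Q "M i" y] AQ MiQ yS by auto
    ultimately show "\<mu> y * (1 - hit_before P Q A y) \<le> \<mu> y * hit_before P A (M i) y"
      using mupos[OF yS] by (intro mult_left_mono) auto
  qed
  have r5: "(\<Sum>y\<in>M i. \<mu> y * hit_before P A (M i) y) \<le> E v"
    by (rule cap_le) (use AQ MiQ AS MiS v1 v0 in auto)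
  have "real K * p_esc P \<mu> K M * sum \<mu> A \<le> \<rho> * (\<Sum>x\<in>A. \<mu> x * e x)"
    using r1 sA by (simp add: field_simps)
  also have "\<dots> \<le> \<rho> * (real K * E v)"
  proof -
    have "(\<Sum>y\<in>M i. \<mu> y * (1 - hit_before P Q A y)) \<le> E v" using r4 r5 by linarith
    then have "real K * (\<Sum>x\<in>A. \<mu> x * e x * hi x) \<le> real K * E v" unfolding r3 by (intro mult_left_mono) auto
    then show ?thesis using r2 rhopos by (intro mult_left_mono) auto
  qed
  finally have "real K * (p_esc P \<mu> K M * sum \<mu> A) \<le> real K * (\<rho> * E v)" by (simp add: algebra_simps)
  then have "p_esc P \<mu> K M * sum \<mu> A \<le> \<rho> * E v" using K2 by simp
  then show ?thesis using rhopos by (simp add: field_simps)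
qed

end



context mprob begin

lemma expect_scale: "A \<subseteq> S \<Longrightarrow> expect \<mu> A (\<lambda>x. c * g x) = c * expect \<mu> A g"
  by (simp add: expect_sum sum_distrib_left algebra_simps)

lemma variance_scale: "A \<subseteq> S \<Longrightarrow> variance_on \<mu> A (\<lambda>x. c * g x) = c\<^sup>2 * variance_on \<mu> A g"
proof -
  assume A: "A \<subseteq> S"
  have "expect \<mu> A (\<lambda>x. (c * g x)\<^sup>2) = c\<^sup>2 * expect \<mu> A (\<lambda>x. (g x)\<^sup>2)"
    using expect_scale[OF A, of "c\<^sup>2" "\<lambda>x. (g x)\<^sup>2"] by (simp add: power_mult_distrib)
  then show ?thesis unfolding variance_on_def using expect_scale[OF A, of c g]
    by (simp add: power_mult_distrib algebra_simps)
qed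

lemma weighted_var:
  fixes X :: "nat set" and \<nu> g :: "nat \<Rightarrow> real"
  assumes "finite X" "\<And>x. x \<in> X \<Longrightarrow> 0 \<le> \<nu> x" "sum \<nu> X = 1"
  shows "(\<Sum>x\<in>X. \<nu> x * g x)\<^sup>2 \<le> (\<Sum>x\<in>X. \<nu> x * (g x)\<^sup>2)"
proof -
  define a where "a = (\<Sum>x\<in>X. \<nu> x * g x)"
  have "0 \<le> (\<Sum>x\<in>X. \<nu> x * (g x - a)\<^sup>2)" using assms(2) by (intro sum_nonneg mult_nonneg_nonneg) auto
  also have "\<dots> = (\<Sum>x\<in>X. \<nu> x * (g x)\<^sup>2) - 2 * a * (\<Sum>x\<in>X. \<nu> x * g x) + a\<^sup>2 * sum \<nu> X"
    by (simp add: power2_eq_square algebra_simps sum.distrib sum_subtractf sum_distrib_left)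
  also have "\<dots> = (\<Sum>x\<in>X. \<nu> x * (g x)\<^sup>2) - a\<^sup>2" using assms(3) by (simp add: power2_eq_square flip: a_def)
  finally show ?thesis by (simp add: a_def)
qed

lemma variance_nonneg: "A \<subseteq> S \<Longrightarrow> A \<noteq> {} \<Longrightarrow> 0 \<le> variance_on \<mu> A g"
proof -
  assume A: "A \<subseteq> S" "A \<noteq> {}"
  have m: "0 < mass \<mu> A" using mass_pos[OF A] .
  have s1: "(\<Sum>x\<in>A. \<mu> x / mass \<mu> A) = 1" using m mass_sum[OF A(1)] by (simp add: sum_divide_distrib[symmetric])
  have "(\<Sum>x\<in>A. \<mu> x / mass \<mu> A * g x)\<^sup>2 \<le> (\<Sum>x\<in>A. \<mu> x / mass \<mu> A * (g x)\<^sup>2)"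
  proof (intro weighted_var finsub s1 A(1))
    fix x assume "x \<in> A"
    then have "0 < \<mu> x" using A mupos by auto
    then show "0 \<le> \<mu> x / mass \<mu> A" using m by simp
  qed
  then show ?thesis unfolding variance_on_def expect_sum[OF A(1)] by simp
qed

lemma var_bound:
  assumes i: "i < K" and CPI: "\<And>j. j < K \<Longrightarrow> C_PI S P \<mu> (M j) < \<infinity>"
  shows "mass \<mu> (M i) * variance_on \<mu> (M i) f \<le> real_of_ereal (C_PI_M S P \<mu> K M) * E f
       \<and> E f \<le> real_of_ereal (C_PI_M S P \<mu> K M) * E f"
proof (cases "E f = 0")
  case True
  obtain x0 where x0: "x0 \<in> M i" using M_ne[OF i] by auto
  have MiS: "M i \<subseteq> S" using M_S[OF i] .
  have fc: "x \<in> M i \<Longrightarrow> f x = f x0" for x using E0_const[OF True] x0 MiS by auto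
  have m: "0 < mass \<mu> (M i)" using mass_pos[OF MiS M_ne[OF i]] .
  have s1: "(\<Sum>x\<in>M i. \<mu> x / mass \<mu> (M i)) = 1" using m mass_sum[OF MiS] by (simp add: sum_divide_distrib[symmetric])
  have ec: "expect \<mu> (M i) (\<lambda>x. q (f x)) = q (f x0)" for q
  proof -
    have "expect \<mu> (M i) (\<lambda>x. q (f x)) = (\<Sum>x\<in>M i. \<mu> x / mass \<mu> (M i) * q (f x0))"
      unfolding expect_sum[OF MiS] by (rule sum.cong) (auto simp: fc)
    also have "\<dots> = (\<Sum>x\<in>M i. \<mu> x / mass \<mu> (M i)) * q (f x0)" by (rule sum_distrib_right[symmetric])
    finally show ?thesis using s1 by simp
  qed
  have e1: "expect \<mu> (M i) f = f x0" using ec[of "\<lambda>t. t"] by simp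
  have e2: "expect \<mu> (M i) (\<lambda>x. (f x)\<^sup>2) = (f x0)\<^sup>2" using ec[of "\<lambda>t. t\<^sup>2"] by simp
  have "variance_on \<mu> (M i) f = 0" unfolding variance_on_def e1 e2 by simp
  then show ?thesis using True by simp
next
  case False
  then have Epos: "0 < E f" using E_nonneg[of f] by simp
  define sc where "sc = 1 / sqrt (E f)"
  define g where "g x = sc * f x" for x
  have Eg: "E g = 1" unfolding g_def E_scale sc_def using Epos by (simp add: power_divide)
  have gin: "l2 S \<mu> g \<and> dirichlet S P \<mu> g = 1" by (simp add: l2_def finS dirichlet_E Eg)
  define c where "c j = real_of_ereal (C_PI S P \<mu> (M j))" for j
  have cj: "ereal (variance_on \<mu> (M j) g) \<le> C_PI S P \<mu> (M j)" for j
    unfolding C_PI_def using gin by (intro Sup_upper) blast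
  have Cfin: "C_PI S P \<mu> (M j) = ereal (c j)" and vc: "variance_on \<mu> (M j) g \<le> c j" if j: "j < K" for j
  proof -
    have "C_PI S P \<mu> (M j) \<noteq> -\<infinity>" using cj[of j] by auto
    moreover have "C_PI S P \<mu> (M j) \<noteq> \<infinity>" using CPI[OF j] by simp
    ultimately show ce: "C_PI S P \<mu> (M j) = ereal (c j)" unfolding c_def by (cases "C_PI S P \<mu> (M j)") auto
    show "variance_on \<mu> (M j) g \<le> c j" using cj[of j] ce by simp
  qed
  have c0: "j < K \<Longrightarrow> 0 \<le> c j" for j using vc variance_nonneg[OF M_S M_ne, of j g] by force
  have mj0: "j < K \<Longrightarrow> 0 \<le> mass \<mu> (M j)" for j using mass_pos[OF M_S M_ne] less_imp_le by blast
  have "C_PI_M S P \<mu> K M = max 1 (ereal (\<Sum>j<K. mass \<mu> (M j) * c j))"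
    unfolding C_PI_M_def by (simp add: Cfin)
  then have Cval: "real_of_ereal (C_PI_M S P \<mu> K M) = max 1 (\<Sum>j<K. mass \<mu> (M j) * c j)"
    by (simp add: max_def)
  have "mass \<mu> (M i) * c i \<le> (\<Sum>j<K. mass \<mu> (M j) * c j)"
    using i c0 mj0 by (intro member_le_sum) (auto intro: mult_nonneg_nonneg)
  then have Cge: "mass \<mu> (M i) * c i \<le> real_of_ereal (C_PI_M S P \<mu> K M)" "1 \<le> real_of_ereal (C_PI_M S P \<mu> K M)"
    unfolding Cval by auto
  have fg: "f = (\<lambda>x. sqrt (E f) * g x)" using Epos by (auto simp: g_def sc_def)
  have "variance_on \<mu> (M i) f = E f * variance_on \<mu> (M i) g"
    by (subst fg, subst variance_scale[OF M_S[OF i]]) (use Epos in simp)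
  then have "mass \<mu> (M i) * variance_on \<mu> (M i) f = E f * (mass \<mu> (M i) * variance_on \<mu> (M i) g)" by simp
  also have "\<dots> \<le> E f * (mass \<mu> (M i) * c i)"
    using vc[OF i] Epos mj0[OF i] by (intro mult_left_mono) auto
  also have "\<dots> \<le> E f * real_of_ereal (C_PI_M S P \<mu> K M)" using Cge Epos by (intro mult_left_mono) auto
  finally show ?thesis using Cge(2) Epos by (simp add: mult.commute)
qed

end



lemma max0_lip: "\<bar>max 0 a - max 0 b\<bar> \<le> \<bar>a - (b::real)\<bar>"
  by (simp add: max_def abs_if)

lemma absdiff_lip: "\<bar>\<bar>a\<bar> - \<bar>b\<bar>\<bar> \<le> \<bar>a - (b::real)\<bar>"
  by (rule abs_triangle_ineq3)

context mprob begin

lemma cond_sq_Sp: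
  assumes i: "i < K" and x: "x \<in> Sp i"
  shows "cond_sq \<mu> K M f x = (if x \<in> M i then expect \<mu> (M i) (\<lambda>y. (f y)\<^sup>2) else (f x)\<^sup>2)"
proof (cases "\<exists>j<K. x \<in> M j")
  case True
  then obtain j where j: "j < K" "x \<in> M j" by auto
  have ji: "j = i"
  proof (rule ccontr)
    assume "j \<noteq> i"
    then show False using Sp_disj[OF j(1) i] M_Sp[OF j(1)] j x by auto
  qed
  have "(THE j. j < K \<and> x \<in> M j) = i"
  proof (rule the_equality)
    show "i < K \<and> x \<in> M i" using i j ji by simp
    fix j' assume "j' < K \<and> x \<in> M j'"
    then show "j' = i" using M_disj[of j' i] i j ji by auto
  qed
  then show ?thesis using True j ji unfolding cond_sq_def by simp
next
  case False
  then show ?thesis using i unfolding cond_sq_def by auto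
qed

lemma Mi_bound:
  fixes f :: "nat \<Rightarrow> real"
  assumes i: "i < K"
  defines "\<alpha> \<equiv> sqrt (expect \<mu> (M i) (\<lambda>y. (f y)\<^sup>2))"
  shows "(\<Sum>x\<in>M i. \<mu> x * (\<bar>f x\<bar> - \<alpha>)\<^sup>2) \<le> 2 * (mass \<mu> (M i) * variance_on \<mu> (M i) f)"
proof -
  have MiS: "M i \<subseteq> S" using M_S[OF i] .
  define mi where "mi = mass \<mu> (M i)"
  have mpos: "0 < mi" unfolding mi_def using mass_pos[OF MiS M_ne[OF i]] .
  define \<nu> where "\<nu> x = \<mu> x / mi" for x
  have \<nu>nn: "x \<in> M i \<Longrightarrow> 0 \<le> \<nu> x" for x
  proof -
    assume "x \<in> M i"
    then have "0 < \<mu> x" using mupos MiS by auto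
    then show ?thesis using mpos by (simp add: \<nu>_def)
  qed
  have \<nu>1: "sum \<nu> (M i) = 1" using mpos mass_sum[OF MiS] by (simp add: \<nu>_def mi_def sum_divide_distrib[symmetric])
  have finM: "finite (M i)" using finsub[OF MiS] .
  define s where "s = (\<Sum>x\<in>M i. \<nu> x * (f x)\<^sup>2)"
  define n where "n = (\<Sum>x\<in>M i. \<nu> x * \<bar>f x\<bar>)"
  define a where "a = (\<Sum>x\<in>M i. \<nu> x * f x)"
  have es: "expect \<mu> (M i) (\<lambda>y. (f y)\<^sup>2) = s" unfolding expect_sum[OF MiS] s_def \<nu>_def mi_def by simp
  have ea: "expect \<mu> (M i) f = a" unfolding expect_sum[OF MiS] a_def \<nu>_def mi_def by simp
  have s0: "0 \<le> s" unfolding s_def using \<nu>nn by (intro sum_nonneg mult_nonneg_nonneg) auto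
  have \<alpha>s: "\<alpha>\<^sup>2 = s" "0 \<le> \<alpha>" unfolding \<alpha>_def es using s0 by auto
  have n0: "0 \<le> n" unfolding n_def using \<nu>nn by (intro sum_nonneg mult_nonneg_nonneg) auto
  have nn: "n\<^sup>2 \<le> s"
    using weighted_var[OF finM \<nu>nn \<nu>1, of "\<lambda>x. \<bar>f x\<bar>"] unfolding n_def s_def by simp
  have n\<alpha>: "n \<le> \<alpha>" using nn \<alpha>s n0 by (metis abs_of_nonneg real_le_rsqrt real_sqrt_abs)
  have an: "\<bar>a\<bar> \<le> n" unfolding a_def n_def
    using \<nu>nn by (auto intro!: order_trans[OF sum_abs] sum_mono simp: abs_mult)
  have "a\<^sup>2 \<le> n\<^sup>2" using an by (metis abs_ge_zero power2_abs power_mono)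
  then have var: "s - n\<^sup>2 \<le> variance_on \<mu> (M i) f" unfolding variance_on_def es ea by simp
  have "(\<Sum>x\<in>M i. \<nu> x * (\<bar>f x\<bar> - \<alpha>)\<^sup>2) = (\<Sum>x\<in>M i. \<nu> x * (\<bar>f x\<bar>)\<^sup>2) - 2 * \<alpha> * n + \<alpha>\<^sup>2 * sum \<nu> (M i)"
    unfolding n_def by (simp add: power2_eq_square algebra_simps sum.distrib sum_subtractf sum_distrib_left)
  also have "\<dots> = 2 * \<alpha> * (\<alpha> - n)" using \<nu>1 \<alpha>s by (simp add: s_def power2_eq_square algebra_simps)
  also have "\<dots> \<le> 2 * (s - n\<^sup>2)"
  proof -
    have "\<alpha> * (\<alpha> - n) \<le> (\<alpha> + n) * (\<alpha> - n)" using n\<alpha> n0 by (intro mult_right_mono) auto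
    then show ?thesis using \<alpha>s by (simp add: power2_eq_square algebra_simps)
  qed
  also have "2 * (s - n\<^sup>2) \<le> 2 * variance_on \<mu> (M i) f" using var by simp
  finally have "(\<Sum>x\<in>M i. \<nu> x * (\<bar>f x\<bar> - \<alpha>)\<^sup>2) \<le> 2 * variance_on \<mu> (M i) f" .
  moreover have "(\<Sum>x\<in>M i. \<mu> x * (\<bar>f x\<bar> - \<alpha>)\<^sup>2) = mi * (\<Sum>x\<in>M i. \<nu> x * (\<bar>f x\<bar> - \<alpha>)\<^sup>2)"
    using mpos by (simp add: \<nu>_def sum_distrib_left)
  ultimately have "(\<Sum>x\<in>M i. \<mu> x * (\<bar>f x\<bar> - \<alpha>)\<^sup>2) \<le> mi * (2 * variance_on \<mu> (M i) f)"
    using mpos by (simp add: mult_left_mono)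
  then show ?thesis unfolding mi_def by (simp add: algebra_simps)
qed

end



context mprob begin

lemma T_bound:
  fixes f :: "nat \<Rightarrow> real"
  assumes i: "i < K" and CPI: "\<And>j. j < K \<Longrightarrow> C_PI S P \<mu> (M j) < \<infinity>"
  defines "\<alpha> \<equiv> sqrt (expect \<mu> (M i) (\<lambda>y. (f y)\<^sup>2))"
  shows "p_esc P \<mu> K M / \<rho> * (\<Sum>x\<in>Sp i - M i. \<mu> x * (\<bar>f x\<bar> - \<alpha>)\<^sup>2)
     \<le> 192 * real_of_ereal (C_PI_M S P \<mu> K M) * E f"
proof -
  define T where "T = Sp i - M i"
  define \<kappa> where "\<kappa> = p_esc P \<mu> K M / \<rho>"
  define C where "C = real_of_ereal (C_PI_M S P \<mu> K M)"
  have kpos: "0 < \<kappa>" unfolding \<kappa>_def using pesc_pos rhopos by simp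
  have TS: "T \<subseteq> S" using Sp_S[OF i] by (auto simp: T_def)
  have MiS: "M i \<subseteq> S" using M_S[OF i] .
  define up where "up x = max 0 (\<bar>f x\<bar> - \<alpha>)" for x
  define um where "um x = max 0 (\<alpha> - \<bar>f x\<bar>)" for x
  define wp where "wp x = (if x \<in> M i then 0 else up x)" for x
  define wm where "wm x = (if x \<in> M i then 0 else um x)" for x
  have cap: "\<And>A v. A \<subseteq> T \<Longrightarrow> A \<noteq> {} \<Longrightarrow> (\<And>x. x\<in>A \<Longrightarrow> v x = 1) \<Longrightarrow> (\<And>x. x\<in>M i \<Longrightarrow> v x = 0)
       \<Longrightarrow> \<kappa> * sum \<mu> A \<le> E v"
    unfolding \<kappa>_def T_def by (rule cap_cond[OF i])
  have mp: "\<kappa> * (\<Sum>x\<in>T. \<mu> x * (wp x)\<^sup>2) \<le> 16 * E wp"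
    by (rule mazya[OF TS kpos cap]) (auto simp: wp_def up_def)
  have mm: "\<kappa> * (\<Sum>x\<in>T. \<mu> x * (wm x)\<^sup>2) \<le> 16 * E wm"
    by (rule mazya[OF TS kpos cap]) (auto simp: wm_def um_def)
  have Ewp: "E wp \<le> 2 * E up + 4 * (\<Sum>x\<in>M i. \<mu> x * (up x)\<^sup>2)"
    unfolding wp_def by (rule E_cut[OF MiS])
  have Ewm: "E wm \<le> 2 * E um + 4 * (\<Sum>x\<in>M i. \<mu> x * (um x)\<^sup>2)"
    unfolding wm_def by (rule E_cut[OF MiS])
  have Eup: "E up \<le> E f"
  proof (rule E_lip)
    fix x y
    have "\<bar>up x - up y\<bar> \<le> \<bar>(\<bar>f x\<bar> - \<alpha>) - (\<bar>f y\<bar> - \<alpha>)\<bar>" unfolding up_def by (rule max0_lip)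
    also have "\<dots> = \<bar>\<bar>f x\<bar> - \<bar>f y\<bar>\<bar>" by simp
    also have "\<dots> \<le> \<bar>f x - f y\<bar>" by (rule absdiff_lip)
    finally show "\<bar>up x - up y\<bar> \<le> \<bar>f x - f y\<bar>" .
  qed
  have Eum: "E um \<le> E f"
  proof (rule E_lip)
    fix x y
    have "\<bar>um x - um y\<bar> \<le> \<bar>(\<alpha> - \<bar>f x\<bar>) - (\<alpha> - \<bar>f y\<bar>)\<bar>" unfolding um_def by (rule max0_lip)
    also have "\<dots> = \<bar>\<bar>f x\<bar> - \<bar>f y\<bar>\<bar>" by simp
    also have "\<dots> \<le> \<bar>f x - f y\<bar>" by (rule absdiff_lip)
    finally show "\<bar>um x - um y\<bar> \<le> \<bar>f x - f y\<bar>" .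
  qed
  have sq: "(up x)\<^sup>2 + (um x)\<^sup>2 = (\<bar>f x\<bar> - \<alpha>)\<^sup>2" for x
    unfolding up_def um_def by (auto simp: max_def power2_eq_square algebra_simps)
  have sumM: "(\<Sum>x\<in>M i. \<mu> x * (up x)\<^sup>2) + (\<Sum>x\<in>M i. \<mu> x * (um x)\<^sup>2) = (\<Sum>x\<in>M i. \<mu> x * (\<bar>f x\<bar> - \<alpha>)\<^sup>2)"
    by (simp add: sum.distrib[symmetric] distrib_left[symmetric] sq)
  have sumT: "(\<Sum>x\<in>T. \<mu> x * (wp x)\<^sup>2) + (\<Sum>x\<in>T. \<mu> x * (wm x)\<^sup>2) = (\<Sum>x\<in>T. \<mu> x * (\<bar>f x\<bar> - \<alpha>)\<^sup>2)"
  proof -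
    have "x \<in> T \<Longrightarrow> \<mu> x * (wp x)\<^sup>2 + \<mu> x * (wm x)\<^sup>2 = \<mu> x * (\<bar>f x\<bar> - \<alpha>)\<^sup>2" for x
      using sq[of x] by (simp add: T_def wp_def wm_def distrib_left[symmetric])
    then show ?thesis by (simp add: sum.distrib[symmetric])
  qed
  have MiB: "(\<Sum>x\<in>M i. \<mu> x * (\<bar>f x\<bar> - \<alpha>)\<^sup>2) \<le> 2 * (mass \<mu> (M i) * variance_on \<mu> (M i) f)"
    unfolding \<alpha>_def by (rule Mi_bound[OF i])
  have VB: "mass \<mu> (M i) * variance_on \<mu> (M i) f \<le> C * E f" "E f \<le> C * E f"
    using var_bound[OF i CPI] unfolding C_def by auto
  have "\<kappa> * (\<Sum>x\<in>T. \<mu> x * (\<bar>f x\<bar> - \<alpha>)\<^sup>2) = \<kappa> * (\<Sum>x\<in>T. \<mu> x * (wp x)\<^sup>2) + \<kappa> * (\<Sum>x\<in>T. \<mu> x * (wm x)\<^sup>2)"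
    by (simp add: sumT[symmetric] algebra_simps)
  also have "\<dots> \<le> 16 * E wp + 16 * E wm" using mp mm by simp
  also have "\<dots> \<le> 16 * (2 * E up + 4 * (\<Sum>x\<in>M i. \<mu> x * (up x)\<^sup>2)) + 16 * (2 * E um + 4 * (\<Sum>x\<in>M i. \<mu> x * (um x)\<^sup>2))"
    using Ewp Ewm by simp
  also have "\<dots> = 32 * E up + 32 * E um + 64 * (\<Sum>x\<in>M i. \<mu> x * (\<bar>f x\<bar> - \<alpha>)\<^sup>2)"
    by (simp add: sumM[symmetric] algebra_simps)
  also have "\<dots> \<le> 32 * E f + 32 * E f + 64 * (2 * (C * E f))"
    using Eup Eum MiB VB(1) by simp
  also have "\<dots> \<le> 192 * C * E f" using VB(2) by simp
  finally show ?thesis unfolding \<kappa>_def T_def C_def .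
qed

end



context mprob begin

lemma main_ineq:
  fixes f :: "nat \<Rightarrow> real"
  assumes i: "i < K" and CPI: "\<And>j. j < K \<Longrightarrow> C_PI S P \<mu> (M j) < \<infinity>"
    and Cm: "\<And>x. x \<in> Sp i \<Longrightarrow> ln (1 + exp 2 / (\<mu> x / mass \<mu> (Sp i))) \<le> Cm"
  shows "ent \<mu> (Sp i) (cond_sq \<mu> K M f) \<le> ereal (1152 * Cm * real_of_ereal (C_PI_M S P \<mu> K M) * \<rho>
             / (mass \<mu> (Sp i) * p_esc P \<mu> K M) * dirichlet S P \<mu> f)"
proof -
  define X where "X = Sp i"
  define C where "C = real_of_ereal (C_PI_M S P \<mu> K M)"
  define pe where "pe = p_esc P \<mu> K M"
  have XS: "X \<subseteq> S" using Sp_S[OF i] by (simp add: X_def)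
  have finX: "finite X" using finsub[OF XS] .
  have MiX: "M i \<subseteq> X" using M_Sp[OF i] by (simp add: X_def)
  have Xne: "X \<noteq> {}" using MiX M_ne[OF i] by auto
  define m where "m = mass \<mu> X"
  have mpos: "0 < m" unfolding m_def using mass_pos[OF XS Xne] .
  have msum: "m = sum \<mu> X" unfolding m_def using mass_sum[OF XS] .
  define \<nu> where "\<nu> x = \<mu> x / m" for x
  have \<nu>pos: "x \<in> X \<Longrightarrow> 0 < \<nu> x" for x using mupos XS mpos by (auto simp: \<nu>_def)
  have \<nu>1: "sum \<nu> X = 1" using mpos msum by (simp add: \<nu>_def sum_divide_distrib[symmetric])
  define \<alpha> where "\<alpha> = sqrt (expect \<mu> (M i) (\<lambda>y. (f y)\<^sup>2))"
  have e0: "0 \<le> expect \<mu> (M i) (\<lambda>y. (f y)\<^sup>2)"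
  proof -
    have "0 < mass \<mu> (M i)" using mass_pos[OF M_S[OF i] M_ne[OF i]] .
    note mp = this
    have "0 \<le> (\<Sum>x\<in>M i. \<mu> x / mass \<mu> (M i) * (f x)\<^sup>2)"
    proof (rule sum_nonneg)
      fix x assume "x \<in> M i"
      then have "0 < \<mu> x" using mupos M_S[OF i] by auto
      then show "0 \<le> \<mu> x / mass \<mu> (M i) * (f x)\<^sup>2" using mp by simp
    qed
    then show ?thesis using expect_sum[OF M_S[OF i], of "\<lambda>y. (f y)\<^sup>2"] by simp
  qed
  have \<alpha>0: "0 \<le> \<alpha>" using e0 by (simp add: \<alpha>_def)
  define h where "h x = (if x \<in> M i then \<alpha> else \<bar>f x\<bar>)" for x
  define g where "g = cond_sq \<mu> K M f"
  have gh: "x \<in> X \<Longrightarrow> g x = (h x)\<^sup>2" for x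
    using cond_sq_Sp[OF i, of x f] e0 unfolding g_def h_def \<alpha>_def X_def by auto
  have hnn: "x \<in> X \<Longrightarrow> 0 \<le> h x" for x using \<alpha>0 by (simp add: h_def)
  have exp_X: "expect \<mu> X q = (\<Sum>x\<in>X. \<nu> x * q x)" for q
    unfolding expect_sum[OF XS] \<nu>_def m_def ..
  have ent_eq: "ent \<mu> X g = ereal ((\<Sum>x\<in>X. \<nu> x * ((h x)\<^sup>2 * ln ((h x)\<^sup>2)))
      - (\<Sum>x\<in>X. \<nu> x * (h x)\<^sup>2) * ln (\<Sum>x\<in>X. \<nu> x * (h x)\<^sup>2))"
  proof -
    have s1: "(\<Sum>x\<in>X. \<nu> x * (g x * ln (g x))) = (\<Sum>x\<in>X. \<nu> x * ((h x)\<^sup>2 * ln ((h x)\<^sup>2)))"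
      by (rule sum.cong) (auto simp: gh)
    have s2: "(\<Sum>x\<in>X. \<nu> x * g x) = (\<Sum>x\<in>X. \<nu> x * (h x)\<^sup>2)"
      by (rule sum.cong) (auto simp: gh)
    show ?thesis unfolding ent_def using finX by (simp add: exp_X s1 s2)
  qed
  have Cm': "x \<in> X \<Longrightarrow> ln (1 + exp 2 / \<nu> x) \<le> Cm" for x using Cm by (simp add: \<nu>_def m_def X_def)
  have EB: "(\<Sum>x\<in>X. \<nu> x * ((h x)\<^sup>2 * ln ((h x)\<^sup>2))) - (\<Sum>x\<in>X. \<nu> x * (h x)\<^sup>2) * ln (\<Sum>x\<in>X. \<nu> x * (h x)\<^sup>2)
     \<le> 6 * Cm * ((\<Sum>x\<in>X. \<nu> x * (h x)\<^sup>2) - (\<Sum>x\<in>X. \<nu> x * h x)\<^sup>2)"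
    by (rule ent_bound[OF finX \<nu>pos \<nu>1 hnn Cm'])
  have Cm0: "0 \<le> Cm"
  proof -
    obtain x0 where x0: "x0 \<in> X" using Xne by auto
    have "0 \<le> ln (1 + exp 2 / \<nu> x0)" using \<nu>pos[OF x0] by (intro ln_ge_zero) simp
    then show ?thesis using Cm'[OF x0] by linarith
  qed
  define Z where "Z = (\<Sum>x\<in>Sp i - M i. \<mu> x * (\<bar>f x\<bar> - \<alpha>)\<^sup>2)"
  have varle: "(\<Sum>x\<in>X. \<nu> x * (h x)\<^sup>2) - (\<Sum>x\<in>X. \<nu> x * h x)\<^sup>2 \<le> (\<Sum>x\<in>X. \<nu> x * (h x - \<alpha>)\<^sup>2)"
  proof -
    define a where "a = (\<Sum>x\<in>X. \<nu> x * h x)"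
    have "(\<Sum>x\<in>X. \<nu> x * (h x - \<alpha>)\<^sup>2) = (\<Sum>x\<in>X. \<nu> x * (h x)\<^sup>2) - 2 * \<alpha> * (\<Sum>x\<in>X. \<nu> x * h x) + \<alpha>\<^sup>2 * sum \<nu> X"
      by (simp add: power2_eq_square algebra_simps sum.distrib sum_subtractf sum_distrib_left)
    also have "\<dots> = (\<Sum>x\<in>X. \<nu> x * (h x)\<^sup>2) - a\<^sup>2 + (a - \<alpha>)\<^sup>2" using \<nu>1
      by (simp add: power2_eq_square algebra_simps flip: a_def)
    finally show ?thesis unfolding a_def[symmetric] by simp
  qed
  have splitZ: "(\<Sum>x\<in>X. \<nu> x * (h x - \<alpha>)\<^sup>2) = Z / m"
  proof -
    have "(\<Sum>x\<in>X. \<nu> x * (h x - \<alpha>)\<^sup>2) = (\<Sum>x\<in>X - M i. \<nu> x * (h x - \<alpha>)\<^sup>2) + (\<Sum>x\<in>M i. \<nu> x * (h x - \<alpha>)\<^sup>2)"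
      by (rule sum.subset_diff[OF MiX finX])
    also have "(\<Sum>x\<in>M i. \<nu> x * (h x - \<alpha>)\<^sup>2) = 0" by (simp add: h_def)
    also have "(\<Sum>x\<in>X - M i. \<nu> x * (h x - \<alpha>)\<^sup>2) = (\<Sum>x\<in>X - M i. \<mu> x * (\<bar>f x\<bar> - \<alpha>)\<^sup>2 / m)"
      by (rule sum.cong) (auto simp: h_def \<nu>_def)
    also have "\<dots> = Z / m" unfolding Z_def X_def by (simp add: sum_divide_distrib)
    finally show ?thesis by simp
  qed
  have TB: "pe / \<rho> * Z \<le> 192 * C * E f"
    unfolding pe_def Z_def C_def \<alpha>_def by (rule T_bound[OF i CPI])
  have pepos: "0 < pe" unfolding pe_def by (rule pesc_pos)
  have Zle: "Z \<le> 192 * C * E f * \<rho> / pe"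
    using TB pepos rhopos by (simp add: field_simps)
  have "(\<Sum>x\<in>X. \<nu> x * ((h x)\<^sup>2 * ln ((h x)\<^sup>2))) - (\<Sum>x\<in>X. \<nu> x * (h x)\<^sup>2) * ln (\<Sum>x\<in>X. \<nu> x * (h x)\<^sup>2)
      \<le> 6 * Cm * (Z / m)"
    using EB varle splitZ Cm0 by (smt (verit) mult_left_mono)
  also have "\<dots> \<le> 6 * Cm * ((192 * C * E f * \<rho> / pe) / m)"
    using Zle mpos Cm0 by (intro mult_left_mono divide_right_mono) auto
  also have "\<dots> = 1152 * Cm * C * \<rho> / (m * pe) * E f" by (simp add: field_simps)
  finally show ?thesis
    using ent_eq unfolding X_def g_def m_def C_def pe_def dirichlet_E by simp
qed

end



context pchain begin

lemma mu_pos: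
  fixes \<mu> :: "nat \<Rightarrow> real"
  assumes nn: "\<forall>x\<in>S. 0 \<le> \<mu> x" and hs: "(\<mu> has_sum 1) S"
    and st: "\<forall>y\<in>S. ((\<lambda>x. \<mu> x * trans_p P x y) has_sum \<mu> y) S" and x: "x \<in> S"
  shows "0 < \<mu> x"
proof (rule ccontr)
  assume nx: "\<not> 0 < \<mu> x"
  define W where "W = {z\<in>S. 0 < \<mu> z}"
  have Wc: "set_pmf (P z) \<subseteq> W" if z: "z \<in> W" for z
  proof
    fix y assume y: "y \<in> set_pmf (P z)"
    have zS: "z \<in> S" using z by (simp add: W_def)
    have yS: "y \<in> S" using closedS[OF zS] y by auto
    have tn: "0 \<le> \<mu> w * trans_p P w y" if "w \<in> S - {z}" for w
      using that nn by (simp add: trans_p_def)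
    have "sum (\<lambda>x. \<mu> x * trans_p P x y) {z} \<le> \<mu> y"
      using finite_sum_le_has_sum[OF st[rule_format, OF yS], of "{z}"] zS tn by blast
    moreover have "0 < \<mu> z * trans_p P z y"
    proof -
      have "0 < \<mu> z" using z by (simp add: W_def)
      moreover have "0 < trans_p P z y" using y by (simp add: trans_p_def pmf_positive)
      ultimately show ?thesis by simp
    qed
    ultimately show "y \<in> W" using yS by (simp add: W_def)
  qed
  have "W \<noteq> {}"
  proof
    assume "W = {}"
    then have z: "\<And>z. z \<in> S \<Longrightarrow> \<mu> z = 0" using nn unfolding W_def by fastforce
    have "((\<lambda>_. 0::real) has_sum 0) S" by (rule has_sum_0) simp
    then have "(\<mu> has_sum 0) S" by (rule has_sum_cong[THEN iffD1, rotated]) (simp add: z)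
    then have "(1::real) = 0" using has_sum_unique[OF hs] by blast
    then show False by simp
  qed
  then obtain w where w: "w \<in> W" by auto
  have xW: "x \<notin> W" using nx by (simp add: W_def)
  have WS: "W \<subseteq> S" by (auto simp: W_def)
  show False by (rule closed_contra[OF Wc WS w x xW])
qed

end

lemma C_mass_upper:
  assumes "j < K" "x \<in> Sp j"
  shows "ereal (ln (1 + exp 2 / (\<mu> x / mass \<mu> (Sp j)))) \<le> C_mass \<mu> K Sp"
proof -
  have "ereal (ln (1 + exp 2 / (\<mu> x / mass \<mu> (Sp j)))) \<le> (SUP x\<in>Sp j. ereal (ln (1 + exp 2 / (\<mu> x / mass \<mu> (Sp j)))))"
    using assms(2) by (rule SUP_upper)
  also have "\<dots> \<le> C_mass \<mu> K Sp" unfolding C_mass_def using assms(1) by (intro SUP_upper) simp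
  finally show ?thesis .
qed

lemma finite_from_Cmass:
  fixes \<mu> :: "nat \<Rightarrow> real"
  assumes pos: "\<forall>x\<in>S. 0 < \<mu> x" and hs: "(\<mu> has_sum 1) S"
    and U: "(\<Union>i<K. Sp i) = S" and MSp: "\<forall>j<K. M j \<subseteq> Sp j \<and> M j \<noteq> {}"
    and Cf: "C_mass \<mu> K Sp = ereal Cm"
  shows "finite S"
proof (rule ccontr)
  assume inf: "infinite S"
  have "\<exists>j<K. infinite (Sp j)"
  proof (rule ccontr)
    assume "\<not> (\<exists>j<K. infinite (Sp j))"
    then have "finite (\<Union>i<K. Sp i)" by auto
    then show False using U inf by simp
  qed
  then obtain j where j: "j < K" "infinite (Sp j)" by blast
  have SpS: "Sp j \<subseteq> S" using U j by auto
  have "\<mu> summable_on S" using hs by (auto simp: summable_on_def)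
  then have summ: "\<mu> summable_on Sp j" by (rule summable_on_subset_banach[OF _ SpS])
  define m where "m = mass \<mu> (Sp j)"
  obtain x0 where x0: "x0 \<in> Sp j" using MSp j by blast
  have "sum \<mu> {x0} \<le> m" unfolding m_def mass_def
    by (rule finite_sum_le_infsum[OF summ]) (use x0 pos SpS in \<open>auto intro: less_imp_le\<close>)
  moreover have "0 < \<mu> x0" using pos x0 SpS by blast
  ultimately have mpos: "0 < m" by simp
  define \<delta> where "\<delta> = exp 2 * m / exp Cm"
  have dpos: "0 < \<delta>" using mpos by (simp add: \<delta>_def)
  have big: "\<delta> \<le> \<mu> x" if x: "x \<in> Sp j" for x
  proof -
    have mx: "0 < \<mu> x" using pos x SpS by auto
    have "ereal (ln (1 + exp 2 / (\<mu> x / m))) \<le> ereal Cm" using C_mass_upper[where j=j and K=K and x=x and Sp=Sp and \<mu>=\<mu>, OF j(1) x] Cf by (simp add: m_def)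
    then have "ln (1 + exp 2 / (\<mu> x / m)) \<le> Cm" by simp
    moreover have yp: "0 < 1 + exp 2 / (\<mu> x / m)" using mx mpos by (simp add: add_pos_pos)
    ultimately have "exp (ln (1 + exp 2 / (\<mu> x / m))) \<le> exp Cm" by (subst exp_le_cancel_iff)
    then have "1 + exp 2 / (\<mu> x / m) \<le> exp Cm" by (simp only: exp_ln[OF yp])
    then have "exp 2 * m / \<mu> x \<le> exp Cm" by simp
    then show ?thesis using mx by (simp add: \<delta>_def field_simps)
  qed
  obtain n :: nat where n: "1 / \<delta> < real n" using reals_Archimedean2 by blast
  obtain F where F: "F \<subseteq> Sp j" "finite F" "card F = n" using infinite_arbitrarily_large[OF j(2)] by blast
  have "real n * \<delta> \<le> sum \<mu> F"
  proof -
    have "sum (\<lambda>_. \<delta>) F \<le> sum \<mu> F" using big F(1) by (intro sum_mono) auto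
    then show ?thesis using F(3) by simp
  qed
  moreover have "sum \<mu> F \<le> 1"
    by (rule finite_sum_le_has_sum[OF hs F(2)]) (use F(1) SpS pos in \<open>auto intro: less_imp_le\<close>)
  moreover have "1 < real n * \<delta>" using n dpos by (simp add: field_simps)
  ultimately show False by simp
qed

theorem mainTheorem16:
  shows "\<exists>c::real. \<forall>(S::nat set) (P::nat \<Rightarrow> nat pmf) (\<mu>::nat \<Rightarrow> real) (K::nat)
      (M::nat \<Rightarrow> nat set) (Sp::nat \<Rightarrow> nat set) (\<rho>::real).
    markov_setting S P \<mu> \<and> 2 \<le> K \<and> metastable_sets S K M \<and> 0 < \<rho> \<and>
    rho_metastable S P \<mu> K M \<rho> \<and> metastable_partition S P K M Sp \<and>
    (\<forall>j<K. C_PI S P \<mu> (M j) < \<infinity>) \<and> C_mass \<mu> K Sp < \<infinity> \<longrightarrow>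
    (\<forall>f i. l2 S \<mu> f \<and> i < K \<longrightarrow>
      ent \<mu> (Sp i) (cond_sq \<mu> K M f) \<le>
      ereal (c * real_of_ereal (C_mass \<mu> K Sp) * real_of_ereal (C_PI_M S P \<mu> K M) * \<rho>
             / (mass \<mu> (Sp i) * p_esc P \<mu> K M) * dirichlet S P \<mu> f))"
proof (intro exI[of _ 1152] allI impI)
  fix S P \<mu> K M Sp \<rho> f i
  assume H: "markov_setting S P \<mu> \<and> 2 \<le> K \<and> metastable_sets S K M \<and> 0 < \<rho> \<and>
    rho_metastable S P \<mu> K M \<rho> \<and> metastable_partition S P K M Sp \<and>
    (\<forall>j<K. C_PI S P \<mu> (M j) < \<infinity>) \<and> C_mass \<mu> K Sp < \<infinity>"
    and fi: "l2 S \<mu> f \<and> i < K"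
  have ms: "markov_setting S P \<mu>" and K2: "2 \<le> K" and msets: "metastable_sets S K M" and rpos: "0 < \<rho>"
    and rhom: "rho_metastable S P \<mu> K M \<rho>" and part: "metastable_partition S P K M Sp"
    and CPI: "\<forall>j<K. C_PI S P \<mu> (M j) < \<infinity>" and Cmf: "C_mass \<mu> K Sp < \<infinity>" using H by auto
  have i: "i < K" using fi by simp
  have clo: "\<And>x. x \<in> S \<Longrightarrow> set_pmf (P x) \<subseteq> S" using ms by (simp add: markov_setting_def)
  have irr: "irreducible S P" using ms by (simp add: markov_setting_def)
  interpret pc: pchain S P by (rule pchain.intro[OF clo irr])
  have hs: "(\<mu> has_sum 1) S" using ms by (simp add: markov_setting_def)
  have nn: "\<forall>x\<in>S. 0 \<le> \<mu> x" using ms by (simp add: markov_setting_def)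
  have st: "\<forall>y\<in>S. ((\<lambda>x. \<mu> x * trans_p P x y) has_sum \<mu> y) S" using ms by (simp add: markov_setting_def)
  have pos: "\<forall>x\<in>S. 0 < \<mu> x" using pc.mu_pos[OF nn hs st] by blast
  have U: "(\<Union>i<K. Sp i) = S" using part by (simp add: metastable_partition_def)
  have MSp: "\<forall>j<K. M j \<subseteq> Sp j \<and> M j \<noteq> {}"
    using part msets by (simp add: metastable_partition_def metastable_sets_def)
  have Cne: "C_mass \<mu> K Sp \<noteq> -\<infinity>"
  proof -
    have K0: "0 < K" using K2 by simp
    then have "M 0 \<subseteq> Sp 0" "M 0 \<noteq> {}" using MSp by auto
    then obtain x0 where "x0 \<in> Sp 0" by auto
    then have "ereal (ln (1 + exp 2 / (\<mu> x0 / mass \<mu> (Sp 0)))) \<le> C_mass \<mu> K Sp"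
      using C_mass_upper[where j=0 and K=K and x=x0 and Sp=Sp and \<mu>=\<mu>] K2 by simp
    then show ?thesis by auto
  qed
  define Cm where "Cm = real_of_ereal (C_mass \<mu> K Sp)"
  have Cf: "C_mass \<mu> K Sp = ereal Cm" unfolding Cm_def using Cne Cmf by (cases "C_mass \<mu> K Sp") auto
  have finS: "finite S" by (rule finite_from_Cmass[OF pos hs U MSp Cf])
  interpret mp: mprob S P \<mu> K M Sp \<rho>
  proof unfold_locales
    show "finite S" by fact
    show "\<And>x. x \<in> S \<Longrightarrow> 0 < \<mu> x" using pos by blast
    show "\<And>y. y \<in> S \<Longrightarrow> (\<Sum>x\<in>S. \<mu> x * trans_p P x y) = \<mu> y"
    proof -
      fix y assume y: "y \<in> S"
      have "((\<lambda>x. \<mu> x * trans_p P x y) has_sum \<mu> y) S" using ms y by (simp add: markov_setting_def)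
      moreover have "((\<lambda>x. \<mu> x * trans_p P x y) has_sum (\<Sum>x\<in>S. \<mu> x * trans_p P x y)) S" using finS by simp
      ultimately show "(\<Sum>x\<in>S. \<mu> x * trans_p P x y) = \<mu> y" using has_sum_unique by blast
    qed
    show "\<And>x y. x \<in> S \<Longrightarrow> y \<in> S \<Longrightarrow> \<mu> x * trans_p P x y = \<mu> y * trans_p P y x"
      using ms by (simp add: markov_setting_def)
    show "2 \<le> K" by fact
    show "metastable_sets S K M" by fact
    show "0 < \<rho>" by fact
    show "rho_metastable S P \<mu> K M \<rho>" by fact
    show "metastable_partition S P K M Sp" by fact
  qed
  have Cm: "ln (1 + exp 2 / (\<mu> x / mass \<mu> (Sp i))) \<le> Cm" if x: "x \<in> Sp i" for x
    using C_mass_upper[where j=i and K=K and x=x and Sp=Sp and \<mu>=\<mu>, OF i x] Cf by simp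
  show "ent \<mu> (Sp i) (cond_sq \<mu> K M f) \<le>
      ereal (1152 * real_of_ereal (C_mass \<mu> K Sp) * real_of_ereal (C_PI_M S P \<mu> K M) * \<rho>
             / (mass \<mu> (Sp i) * p_esc P \<mu> K M) * dirichlet S P \<mu> f)"
  proof -
    have CPI': "\<And>j. j < K \<Longrightarrow> C_PI S P \<mu> (M j) < \<infinity>" using CPI by simp
    show ?thesis using mp.main_ineq[OF i CPI' Cm, of f] unfolding Cm_def .
  qed
qed



end
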